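(* In the one-state softmax setting of the context, run the update $\theta_{t+1} = \theta_t + \eta_t(\hat r_t - \hat b_t)$ with on-policy sampling $a_t\sim\pi_{\theta_t}(\cdot)$, either (i) with $\hat r_t(a) = \frac{\mathbb{I}\{a_t=a\}}{\pi_{\theta_t}(a)} r(a)$ and constant $\eta_t=\eta>0$, or (ii) with $\hat r_t(a) = \frac{\mathbb{I}\{a_t=a\}}{\pi_{\theta_t}(a)}x_t(a)$ and $\eta_t = \frac{\pi_{\theta_t}(a_t)|r(a_t)-\pi_{\theta_t}^\top r|}{8R_{\max}^2}$. Then the sequence $(\pi_{\theta_t}^\top r)_{t\ge 1}$ converges with probability one.
   Context: Let $K\ge2$, $r\in[0,1]^K$, softmax policy $\pi_\theta(a) = e^{\theta(a)}/\sum_{a'}e^{\theta(a')}$. For each action $a$, $R_a$ is a reward distribution supported on $[-R_{\max},R_{\max}]$ ($R_{\max}>0$) with mean $r(a)$. At iteration $t$, $a_t\sim\pi_{\theta_t}(\cdot)$; in case (ii) a reward $x_t(a_t)\sim R_{a_t}$ is observed and $x_t(a):=0$ for $a\ne a_t$. The baseline vector is $\hat b_t(a) = \left(\frac{\mathbb{I}\{a_t=a\}}{\pi_{\theta_t}(a)} - 1\right)\pi_{\theta_t}^\top r$. *)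

theory Defs
  imports "HOL-Probability.Probability"
begin

definition softmax :: "('a::finite \<Rightarrow> real) \<Rightarrow> 'a \<Rightarrow> real" where
  "softmax \<theta> a = exp (\<theta> a) / (\<Sum>a'\<in>UNIV. exp (\<theta> a'))"

definition exp_reward :: "('a::finite \<Rightarrow> real) \<Rightarrow> ('a \<Rightarrow> real) \<Rightarrow> real" where
  "exp_reward \<pi> r = (\<Sum>a\<in>UNIV. \<pi> a * r a)"

definition baseline :: "('a::finite \<Rightarrow> real) \<Rightarrow> ('a \<Rightarrow> real) \<Rightarrow> 'a \<Rightarrow> 'a \<Rightarrow> real" where
  "baseline \<theta> r a\<^sub>t a =
     ((if a\<^sub>t = a then 1 else 0) / softmax \<theta> a - 1) * exp_reward (softmax \<theta>) r"

definition rhat_true :: "('a::finite \<Rightarrow> real) \<Rightarrow> ('a \<Rightarrow> real) \<Rightarrow> 'a \<Rightarrow> 'a \<Rightarrow> real" where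
  "rhat_true \<theta> r a\<^sub>t a = (if a\<^sub>t = a then 1 else 0) / softmax \<theta> a * r a"

text \<open>Case (ii) estimator: hat r_t(a) = I{a_t = a}/pi(a) * x_t(a), where x_t(a_t) = x
  is the observed reward and x_t(a) = 0 for a different from a_t.\<close>
definition rhat_obs :: "('a::finite \<Rightarrow> real) \<Rightarrow> real \<Rightarrow> 'a \<Rightarrow> 'a \<Rightarrow> real" where
  "rhat_obs \<theta> x a\<^sub>t a = (if a\<^sub>t = a then 1 else 0) / softmax \<theta> a * (if a\<^sub>t = a then x else 0)"

definition eta_obs :: "('a::finite \<Rightarrow> real) \<Rightarrow> ('a \<Rightarrow> real) \<Rightarrow> real \<Rightarrow> 'a \<Rightarrow> real" where
  "eta_obs \<theta> r Rmax a\<^sub>t =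
     softmax \<theta> a\<^sub>t * \<bar>r a\<^sub>t - exp_reward (softmax \<theta>) r\<bar> / (8 * Rmax\<^sup>2)"

end

theory Submission
  imports Defs
begin


lemma sm_den_pos: "(\<Sum>a'\<in>UNIV. exp ((\<theta>::'a::finite\<Rightarrow>real) a')) > 0"
  by (intro sum_pos) auto

lemma softmax_pos: "softmax \<theta> a > 0"
  unfolding softmax_def using sm_den_pos[of \<theta>] by simp

lemma softmax_sum: "(\<Sum>a\<in>UNIV. softmax \<theta> a) = 1"
  unfolding softmax_def using sm_den_pos[of \<theta>] by (simp add: sum_divide_distrib[symmetric])

lemma softmax_le1: "softmax \<theta> a \<le> 1"
proof -
  have "softmax \<theta> a \<le> (\<Sum>b\<in>UNIV. softmax \<theta> b)"
    by (rule member_le_sum) (auto intro: less_imp_le softmax_pos)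
  then show ?thesis by (simp add: softmax_sum)
qed

lemma exp_reward_bounds:
  assumes "\<And>a. lo \<le> r a" "\<And>a. r a \<le> hi"
  shows "lo \<le> exp_reward (softmax \<theta>) r" "exp_reward (softmax \<theta>) r \<le> hi"
proof -
  have "(\<Sum>a\<in>UNIV. softmax \<theta> a * lo) \<le> exp_reward (softmax \<theta>) r"
    unfolding exp_reward_def by (intro sum_mono mult_left_mono) (auto intro: less_imp_le softmax_pos assms)
  then show "lo \<le> exp_reward (softmax \<theta>) r" by (simp add: sum_distrib_right[symmetric] softmax_sum)
  have "exp_reward (softmax \<theta>) r \<le> (\<Sum>a\<in>UNIV. softmax \<theta> a * hi)"
    unfolding exp_reward_def by (intro sum_mono mult_left_mono) (auto intro: less_imp_le softmax_pos assms)
  then show "exp_reward (softmax \<theta>) r \<le> hi" by (simp add: sum_distrib_right[symmetric] softmax_sum)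
qed

lemma key_update:
  fixes \<theta> :: "'a::finite \<Rightarrow> real" and a :: 'a and r :: "'a \<Rightarrow> real"
  defines "p \<equiv> softmax \<theta> a" and "V \<equiv> exp_reward (softmax \<theta>) r"
  shows "exp_reward (softmax (\<lambda>b. \<theta> b + c + (if b = a then \<Delta> else 0))) r - V
       = p * (exp \<Delta> - 1) / (1 + p * (exp \<Delta> - 1)) * (r a - V)"
proof -
  define S where "S = (\<Sum>b\<in>UNIV. exp (\<theta> b))"
  define N where "N = (\<Sum>b\<in>UNIV. exp (\<theta> b) * r b)"
  define w where "w = exp \<Delta> - 1"
  have S: "S > 0" unfolding S_def by (rule sm_den_pos)
  have e: "exp (\<theta> b + c + (if b = a then \<Delta> else 0)) = exp c * exp (\<theta> b) + (if b = a then exp c * exp (\<theta> a) * w else 0)" for b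
    by (auto simp: exp_add w_def algebra_simps)
  have S': "(\<Sum>b\<in>UNIV. exp (\<theta> b + c + (if b = a then \<Delta> else 0))) = exp c * (S + exp (\<theta> a) * w)"
    unfolding e by (simp add: sum.distrib S_def sum_distrib_left algebra_simps)
  have N': "(\<Sum>b\<in>UNIV. exp (\<theta> b + c + (if b = a then \<Delta> else 0)) / (exp c * (S + exp (\<theta> a) * w)) * r b)
      = exp c * (N + exp (\<theta> a) * w * r a) / (exp c * (S + exp (\<theta> a) * w))"
  proof -
    have "(\<Sum>b\<in>UNIV. exp (\<theta> b + c + (if b = a then \<Delta> else 0)) / (exp c * (S + exp (\<theta> a) * w)) * r b)
       = (\<Sum>b\<in>UNIV. exp (\<theta> b + c + (if b = a then \<Delta> else 0)) * r b) / (exp c * (S + exp (\<theta> a) * w))"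
      by (simp add: sum_divide_distrib)
    also have "(\<Sum>b\<in>UNIV. exp (\<theta> b + c + (if b = a then \<Delta> else 0)) * r b) = exp c * (N + exp (\<theta> a) * w * r a)"
      proof -
      have e2: "exp (\<theta> b + c + (if b = a then \<Delta> else 0)) * r b = exp c * (exp (\<theta> b) * r b) + (if b = a then exp c * exp (\<theta> a) * w * r a else 0)" for b
        unfolding e by (auto simp: algebra_simps)
      show ?thesis unfolding e2 by (simp add: sum.distrib N_def sum_distrib_left algebra_simps)
    qed
    finally show ?thesis .
  qed
  have pw: "1 + p * w > 0"
  proof -
    have p0: "0 < p" "p \<le> 1" using softmax_pos[of \<theta> a] softmax_le1[of \<theta> a] unfolding p_def by auto
    have w: "w > -1" unfolding w_def by simp
    have "p * w > -1"
    proof (cases "w \<ge> 0")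
      case True then show ?thesis using p0 by (smt (verit) mult_nonneg_nonneg)
    next
      case False
      then have "p * w \<ge> 1 * w" using p0 by (intro mult_right_mono_neg) auto
      then show ?thesis using w by simp
    qed
    then show ?thesis by simp
  qed
  have pd: "p = exp (\<theta> a) / S" unfolding p_def softmax_def S_def by simp
  have Vd: "V = N / S" unfolding V_def exp_reward_def softmax_def N_def S_def
    by (simp add: sum_divide_distrib)
  have den: "S + exp (\<theta> a) * w > 0" using pw S unfolding pd
    by (simp add: field_simps)
  have "exp_reward (softmax (\<lambda>b. \<theta> b + c + (if b = a then \<Delta> else 0))) r = (N + exp (\<theta> a) * w * r a) / (S + exp (\<theta> a) * w)"
    unfolding exp_reward_def softmax_def S' N' by simp
  moreover have "(N + exp (\<theta> a) * w * r a) / (S + exp (\<theta> a) * w) - N / S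
     = exp (\<theta> a) / S * w / (1 + exp (\<theta> a) / S * w) * (r a - N / S)"
    using S den by (simp add: field_simps)
  ultimately show ?thesis unfolding w_def[symmetric] pd Vd by simp
qed

lemma exp_quad:
  fixes y :: real
  assumes "\<bar>y\<bar> \<le> 1"
  shows "0 \<le> exp y - 1 - y" "exp y - 1 - y \<le> y\<^sup>2"
proof -
  show "0 \<le> exp y - 1 - y" using exp_ge_add_one_self[of y] by linarith
  show "exp y - 1 - y \<le> y\<^sup>2"
  proof (cases "y \<ge> 0")
    case True then show ?thesis using exp_bound[of y] assms by (simp add: power2_eq_square)
  next
    case False
    define x where "x = - y"
    have x: "0 < x" "x \<le> 1" using False assms unfolding x_def by auto
    have "exp x \<ge> 1 + x" by simp
    then have "exp y * (1 + x) \<le> exp y * exp x" by (intro mult_left_mono) auto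
    also have "\<dots> = 1" unfolding x_def by (simp add: exp_minus_inverse)
    finally have "exp y * (1 + x) \<le> 1" .
    moreover have "(1 - x + x\<^sup>2) * (1 + x) \<ge> 1" using x by (simp add: algebra_simps power2_eq_square power3_eq_cube)
    ultimately have "exp y * (1 + x) \<le> (1 - x + x\<^sup>2) * (1 + x)" by linarith
    then have "exp y \<le> 1 - x + x\<^sup>2" using x by (smt (verit) mult_le_cancel_right)
    then show ?thesis unfolding x_def by (simp add: power2_eq_square)
  qed
qed

lemma f_bounds:
  fixes p \<Delta> :: real
  assumes p: "0 < p" "p \<le> 1" and d: "\<bar>\<Delta>\<bar> \<le> 1"
  defines "w \<equiv> exp \<Delta> - 1"
  shows "\<Delta> - \<Delta>\<^sup>2 \<le> w / (1 + p * w)" "w / (1 + p * w) \<le> \<Delta> + \<Delta>\<^sup>2"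
proof -
  have w: "w > -1" unfolding w_def by simp
  have pw: "1 + p * w > 0"
  proof -
    have "p * w > -1"
    proof (cases "w \<ge> 0")
      case True then show ?thesis using p by (smt (verit) mult_nonneg_nonneg)
    next
      case False
      then have "p * w \<ge> 1 * w" using p by (intro mult_right_mono_neg) auto
      then show ?thesis using w by simp
    qed
    then show ?thesis by simp
  qed
  have "w / (1 + p * w) - w = - p * w\<^sup>2 / (1 + p * w)" using pw by (simp add: field_simps power2_eq_square)
  also have "\<dots> \<le> 0" using pw p by (simp add: divide_nonpos_pos)
  finally have f1: "w / (1 + p * w) \<le> w" by simp
  have "w \<le> \<Delta> + \<Delta>\<^sup>2" using exp_quad(2)[OF d] unfolding w_def by simp
  then show "w / (1 + p * w) \<le> \<Delta> + \<Delta>\<^sup>2" using f1 by simp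
  have w1: "1 + w > 0" using w by simp
  have "w / (1 + p * w) - w / (1 + w) = w\<^sup>2 * (1 - p) / ((1 + p * w) * (1 + w))"
    using pw w1 by (simp add: field_simps power2_eq_square)
  also have "\<dots> \<ge> 0" using pw w1 p by (intro divide_nonneg_pos mult_nonneg_nonneg) auto
  finally have f2: "w / (1 + w) \<le> w / (1 + p * w)" by simp
  have "w / (1 + w) = 1 - exp (- \<Delta>)" unfolding w_def by (simp add: field_simps exp_minus)
  moreover have "exp (- \<Delta>) - 1 - (- \<Delta>) \<le> (-\<Delta>)\<^sup>2" using d by (intro exp_quad(2)) auto
  ultimately have "\<Delta> - \<Delta>\<^sup>2 \<le> w / (1 + w)" by simp
  then show "\<Delta> - \<Delta>\<^sup>2 \<le> w / (1 + p * w)" using f2 by simp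
qed

lemma dV_lower:
  fixes p \<Delta> \<delta> :: real
  assumes p: "0 < p" "p \<le> 1" and d: "\<bar>\<Delta>\<bar> \<le> 1"
  shows "p * (exp \<Delta> - 1) / (1 + p * (exp \<Delta> - 1)) * \<delta> \<ge> p * \<delta> * \<Delta> - p * \<bar>\<delta>\<bar> * \<Delta>\<^sup>2"
proof -
  define f where "f = (exp \<Delta> - 1) / (1 + p * (exp \<Delta> - 1))"
  have fb: "\<Delta> - \<Delta>\<^sup>2 \<le> f" "f \<le> \<Delta> + \<Delta>\<^sup>2" using f_bounds[OF p d] unfolding f_def by auto
  have "\<delta> * f \<ge> \<delta> * \<Delta> - \<bar>\<delta>\<bar> * \<Delta>\<^sup>2"
  proof (cases "\<delta> \<ge> 0")
    case True
    then have "\<delta> * f \<ge> \<delta> * (\<Delta> - \<Delta>\<^sup>2)" using fb by (intro mult_left_mono) auto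
    then show ?thesis using True by (simp add: algebra_simps)
  next
    case False
    then have "\<delta> * f \<ge> \<delta> * (\<Delta> + \<Delta>\<^sup>2)" using fb by (intro mult_left_mono_neg) auto
    then show ?thesis using False by (simp add: algebra_simps)
  qed
  then have "p * (\<delta> * f) \<ge> p * (\<delta> * \<Delta> - \<bar>\<delta>\<bar> * \<Delta>\<^sup>2)" using p by (intro mult_left_mono) auto
  then show ?thesis unfolding f_def by (simp add: algebra_simps)
qed



locale bsub = prob_space M for M :: "'w measure" +
  fixes F :: "nat \<Rightarrow> 'w measure" and V :: "nat \<Rightarrow> 'w \<Rightarrow> real"
  assumes sub: "\<And>t. subalgebra M (F t)"
  and Fmono: "\<And>t. sets (F t) \<subseteq> sets (F (Suc t))"
  and Vm: "\<And>t. V t \<in> borel_measurable (F t)"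
  and V01: "\<And>t \<omega>. \<omega> \<in> space M \<Longrightarrow> 0 \<le> V t \<omega> \<and> V t \<omega> \<le> 1"
  and weak: "\<And>t Y. Y \<in> borel_measurable (F t) \<Longrightarrow> (\<And>\<omega>. \<omega> \<in> space M \<Longrightarrow> 0 \<le> Y \<omega> \<and> Y \<omega> \<le> 1)
      \<Longrightarrow> 0 \<le> (\<integral>\<omega>. Y \<omega> * (V (Suc t) \<omega> - V t \<omega>) \<partial>M)"
begin

lemma spaceF: "space (F t) = space M"
  using sub[of t] unfolding subalgebra_def by auto

lemma sets_mono: "s \<le> t \<Longrightarrow> sets (F s) \<subseteq> sets (F t)"
  by (induction t rule: dec_induct) (use Fmono in auto)

lemma meas_mono: "s \<le> t \<Longrightarrow> f \<in> borel_measurable (F s) \<Longrightarrow> f \<in> borel_measurable (F t)"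
  by (rule measurable_from_subalg[of "F t" "F s"]) (auto simp: subalgebra_def spaceF sets_mono)

lemma measM: "f \<in> borel_measurable (F s) \<Longrightarrow> f \<in> borel_measurable M"
  by (rule measurable_from_subalg[OF sub])

lemma setsM: "A \<in> sets (F s) \<Longrightarrow> A \<in> sets M"
  using sub[of s] unfolding subalgebra_def by auto

lemma sfs: "sigma_finite_subalgebra M (F t)"
  by (rule finite_measure_subalgebra_is_sigma_finite) (unfold_locales, rule sub)

lemma bint: fixes f :: "'w \<Rightarrow> real" and B :: real shows "f \<in> borel_measurable M \<Longrightarrow> (\<And>\<omega>. \<omega> \<in> space M \<Longrightarrow> \<bar>f \<omega>\<bar> \<le> B) \<Longrightarrow> integrable M f"
  by (rule integrable_const_bound[where B=B]) auto

definition "dV t \<omega> = V (Suc t) \<omega> - V t \<omega>"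
definition "ce t = real_cond_exp M (F t) (dV t)"
definition "c t \<omega> = max 0 (min 1 (ce t \<omega>))"
definition "D t \<omega> = dV t \<omega> - c t \<omega>"

lemma dV_meas: "dV t \<in> borel_measurable (F (Suc t))"
  unfolding dV_def using Vm[of "Suc t"] meas_mono[OF _ Vm[of t], of "Suc t"] by measurable

lemma dV_measM[measurable]: "dV t \<in> borel_measurable M"
  using measM[OF dV_meas] .

lemma dV_bd: "\<omega> \<in> space M \<Longrightarrow> \<bar>dV t \<omega>\<bar> \<le> 1"
  unfolding dV_def using V01[of \<omega> t] V01[of \<omega> "Suc t"] by auto

lemma dV_int: "integrable M (dV t)"
  by (rule bint[OF dV_measM dV_bd])

lemma c_meas: "c t \<in> borel_measurable (F t)"
  unfolding c_def ce_def by measurable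

lemma c_measM[measurable]: "c t \<in> borel_measurable M"
  using measM[OF c_meas] .

lemma c_bd: "0 \<le> c t \<omega>" "c t \<omega> \<le> 1"
  unfolding c_def by auto

lemma ce_int_eq:
  assumes Z: "Z \<in> borel_measurable (F t)" and Zb: "\<And>\<omega>. \<omega> \<in> space M \<Longrightarrow> \<bar>Z \<omega>\<bar> \<le> B"
  shows "integrable M (\<lambda>\<omega>. Z \<omega> * ce t \<omega>)" "(\<integral>\<omega>. Z \<omega> * ce t \<omega> \<partial>M) = (\<integral>\<omega>. Z \<omega> * dV t \<omega> \<partial>M)"
proof -
  interpret S: sigma_finite_subalgebra M "F t" by (rule sfs)
  have [measurable]: "Z \<in> borel_measurable M" using measM[OF Z] .
  have i: "integrable M (\<lambda>\<omega>. Z \<omega> * dV t \<omega>)"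
  proof (rule bint[where B="B * 1"])
    fix \<omega> assume "\<omega> \<in> space M"
    moreover have "0 \<le> B" using Zb[OF \<open>\<omega> \<in> space M\<close>] by linarith
    ultimately show "\<bar>Z \<omega> * dV t \<omega>\<bar> \<le> B * 1" unfolding abs_mult
      using Zb dV_bd by (intro mult_mono) auto
  qed measurable
  show "integrable M (\<lambda>\<omega>. Z \<omega> * ce t \<omega>)" unfolding ce_def
    by (rule S.real_cond_exp_intg(1)[OF i Z]) measurable
  show "(\<integral>\<omega>. Z \<omega> * ce t \<omega> \<partial>M) = (\<integral>\<omega>. Z \<omega> * dV t \<omega> \<partial>M)" unfolding ce_def
    by (rule S.real_cond_exp_intg(2)[OF i Z]) measurable
qed

lemma ce_nonneg: "AE \<omega> in M. 0 \<le> ce t \<omega>"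
proof -
  define G where "G = {\<omega> \<in> space M. ce t \<omega> < 0}"
  have [measurable]: "space M \<in> sets (F t)" using sets.top[of "F t"] spaceF by simp
  have Gs: "G \<in> sets (F t)" unfolding G_def ce_def by measurable
  have Gm[measurable]: "G \<in> sets M" using setsM[OF Gs] .
  have im: "indicator G \<in> borel_measurable (F t)" using Gs by measurable
  have "0 \<le> (\<integral>\<omega>. indicator G \<omega> * dV t \<omega> \<partial>M)"
    using weak[OF im] unfolding dV_def by (auto simp: indicator_def)
  also have "\<dots> = (\<integral>\<omega>. indicator G \<omega> * ce t \<omega> \<partial>M)"
    by (rule ce_int_eq(2)[OF im, where B=1, symmetric]) (auto simp: indicator_def)
  finally have 1: "0 \<le> (\<integral>\<omega>. - (indicator G \<omega> * ce t \<omega>) \<partial>M) \<Longrightarrow> (\<integral>\<omega>. - (indicator G \<omega> * ce t \<omega>) \<partial>M) = 0"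
    by simp
  have ii: "integrable M (\<lambda>\<omega>. - (indicator G \<omega> * ce t \<omega>))"
    using ce_int_eq(1)[OF im, where B=1] by (auto simp: indicator_def)
  have nn: "AE \<omega> in M. 0 \<le> - (indicator G \<omega> * ce t \<omega>)"
    by (auto simp: indicator_def G_def)
  have "(\<integral>\<omega>. - (indicator G \<omega> * ce t \<omega>) \<partial>M) = 0"
    using 1 integral_nonneg_AE[OF nn] by simp
  then have "AE \<omega> in M. - (indicator G \<omega> * ce t \<omega>) = 0"
    using integral_nonneg_eq_0_iff_AE[OF ii nn] by simp
  then show ?thesis using AE_space by eventually_elim (auto simp: G_def indicator_def split: if_splits)
qed

lemma ce_le1: "AE \<omega> in M. ce t \<omega> \<le> 1"
proof -
  interpret S: sigma_finite_subalgebra M "F t" by (rule sfs)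
  show ?thesis unfolding ce_def
    by (rule S.real_cond_exp_le_c[OF dV_int]) (use dV_bd in \<open>auto simp: abs_le_iff\<close>)
qed

lemma c_ae: "AE \<omega> in M. c t \<omega> = ce t \<omega>"
  using ce_nonneg[of t] ce_le1[of t] by eventually_elim (auto simp: c_def)

lemma c_int_eq:
  assumes Z: "Z \<in> borel_measurable (F t)" and Zb: "\<And>\<omega>. \<omega> \<in> space M \<Longrightarrow> \<bar>Z \<omega>\<bar> \<le> B"
  shows "(\<integral>\<omega>. Z \<omega> * c t \<omega> \<partial>M) = (\<integral>\<omega>. Z \<omega> * dV t \<omega> \<partial>M)"
proof -
  have "(\<integral>\<omega>. Z \<omega> * c t \<omega> \<partial>M) = (\<integral>\<omega>. Z \<omega> * ce t \<omega> \<partial>M)"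
    by (rule integral_cong_AE) (use c_ae[of t] measM[OF Z] in \<open>auto simp: ce_def\<close>)
  then show ?thesis using ce_int_eq(2)[OF Z Zb] by simp
qed

lemma D_meas: "D t \<in> borel_measurable (F (Suc t))"
  unfolding D_def using dV_meas[of t] meas_mono[OF _ c_meas[of t], of "Suc t"] by measurable

lemma D_measM[measurable]: "D t \<in> borel_measurable M"
  using measM[OF D_meas] .

lemma D_bd: "\<omega> \<in> space M \<Longrightarrow> \<bar>D t \<omega>\<bar> \<le> 2"
  unfolding D_def using dV_bd[of \<omega> t] c_bd[of t \<omega>] by auto

lemma D_orth:
  assumes Z: "Z \<in> borel_measurable (F k)" and k: "k \<le> t" and Zb: "\<And>\<omega>. \<omega> \<in> space M \<Longrightarrow> \<bar>Z \<omega>\<bar> \<le> B"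
  shows "(\<integral>\<omega>. Z \<omega> * D t \<omega> \<partial>M) = 0"
proof -
  have Zt: "Z \<in> borel_measurable (F t)" using meas_mono[OF k Z] .
  have [measurable]: "Z \<in> borel_measurable M" using measM[OF Z] .
  have i1: "integrable M (\<lambda>\<omega>. Z \<omega> * dV t \<omega>)"
  proof (rule bint[where B="B * 1"])
    fix \<omega> assume "\<omega> \<in> space M"
    moreover have "0 \<le> B" using Zb[OF \<open>\<omega> \<in> space M\<close>] by linarith
    ultimately show "\<bar>Z \<omega> * dV t \<omega>\<bar> \<le> B * 1" unfolding abs_mult
      using Zb dV_bd by (intro mult_mono) auto
  qed measurable
  have i2: "integrable M (\<lambda>\<omega>. Z \<omega> * c t \<omega>)"
  proof (rule bint[where B="B * 1"])
    fix \<omega> assume "\<omega> \<in> space M"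
    moreover have "0 \<le> B" using Zb[OF \<open>\<omega> \<in> space M\<close>] by linarith
    ultimately show "\<bar>Z \<omega> * c t \<omega>\<bar> \<le> B * 1" unfolding abs_mult
      using Zb c_bd[of t \<omega>] by (intro mult_mono) auto
  qed measurable
  have "(\<integral>\<omega>. Z \<omega> * D t \<omega> \<partial>M) = (\<integral>\<omega>. Z \<omega> * dV t \<omega> - Z \<omega> * c t \<omega> \<partial>M)"
    unfolding D_def by (simp add: algebra_simps)
  also have "\<dots> = 0" using c_int_eq[OF Zt Zb] by (simp add: Bochner_Integration.integral_diff[OF i1 i2])
  finally show ?thesis .
qed

lemma sq_le: "\<bar>x::real\<bar> \<le> b \<Longrightarrow> \<bar>x\<^sup>2\<bar> \<le> b\<^sup>2"
  by (metis abs_ge_zero abs_power2 power2_abs power_mono)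

lemma sq_le': "\<bar>x::real\<bar> \<le> b \<Longrightarrow> \<bar>indicator A w * x\<^sup>2\<bar> \<le> b\<^sup>2"
  using sq_le[of x b] by (auto simp: indicator_def)

definition "N m n \<omega> = (\<Sum>s\<in>{m..<n}. D s \<omega>)"

lemma N_meas: "N m n \<in> borel_measurable (F n)"
  unfolding N_def
proof (rule borel_measurable_sum)
  fix s assume "s \<in> {m..<n}"
  then show "D s \<in> borel_measurable (F n)" using meas_mono[OF _ D_meas[of s], of n] by auto
qed

lemma N_measM[measurable]: "N m n \<in> borel_measurable M"
  using measM[OF N_meas] .

lemma N_bd: "\<omega> \<in> space M \<Longrightarrow> \<bar>N m n \<omega>\<bar> \<le> 2 * real n"
proof -
  assume w: "\<omega> \<in> space M"
  have "\<bar>N m n \<omega>\<bar> \<le> (\<Sum>s\<in>{m..<n}. \<bar>D s \<omega>\<bar>)" unfolding N_def by (rule sum_abs)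
  also have "\<dots> \<le> real (card {m..<n}) * 2" by (rule sum_bounded_above) (use D_bd w in auto)
  also have "\<dots> \<le> 2 * real n" by simp
  finally show ?thesis .
qed

lemma N_split: "m \<le> k \<Longrightarrow> k \<le> n \<Longrightarrow> N m n \<omega> = N m k \<omega> + N k n \<omega>"
  unfolding N_def by (simp add: sum.atLeastLessThan_concat)

lemma N_orth:
  assumes Z: "Z \<in> borel_measurable (F k)" and k: "k \<le> n" and Zb: "\<And>\<omega>. \<omega> \<in> space M \<Longrightarrow> \<bar>Z \<omega>\<bar> \<le> B"
  shows "(\<integral>\<omega>. Z \<omega> * N k n \<omega> \<partial>M) = 0"
proof -
  have [measurable]: "Z \<in> borel_measurable M" using measM[OF Z] .
  have i: "integrable M (\<lambda>\<omega>. Z \<omega> * D s \<omega>)" for s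
  proof (rule bint[where B="B * 2"])
    fix \<omega> assume w: "\<omega> \<in> space M"
    moreover have "0 \<le> B" using Zb[OF w] by linarith
    ultimately show "\<bar>Z \<omega> * D s \<omega>\<bar> \<le> B * 2" unfolding abs_mult
      using Zb D_bd by (intro mult_mono) auto
  qed measurable
  have "(\<integral>\<omega>. Z \<omega> * N k n \<omega> \<partial>M) = (\<integral>\<omega>. (\<Sum>s\<in>{k..<n}. Z \<omega> * D s \<omega>) \<partial>M)"
    unfolding N_def by (simp add: sum_distrib_left)
  also have "\<dots> = (\<Sum>s\<in>{k..<n}. (\<integral>\<omega>. Z \<omega> * D s \<omega> \<partial>M))"
    by (rule Bochner_Integration.integral_sum) (use i in auto)
  also have "\<dots> = 0"
    by (rule sum.neutral) (use D_orth[OF Z _ Zb] in auto)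
  finally show ?thesis .
qed

lemma N_sq_mono:
  assumes mk: "m \<le> k" and kn: "k \<le> n" and Bs: "Bs \<in> sets (F k)"
  shows "(\<integral>\<omega>. indicator Bs \<omega> * (N m k \<omega>)\<^sup>2 \<partial>M) \<le> (\<integral>\<omega>. indicator Bs \<omega> * (N m n \<omega>)\<^sup>2 \<partial>M)"
proof -
  have [measurable]: "Bs \<in> sets M" using setsM[OF Bs] .
  have Zm: "(\<lambda>\<omega>. indicator Bs \<omega> * N m k \<omega>) \<in> borel_measurable (F k)"
    using N_meas[of m k] Bs by measurable
  have Zb: "\<bar>indicator Bs \<omega> * N m k \<omega>\<bar> \<le> 2 * real k" if "\<omega> \<in> space M" for \<omega>
    using N_bd[OF that, of m k] by (auto simp: indicator_def)
  have o: "(\<integral>\<omega>. (indicator Bs \<omega> * N m k \<omega>) * N k n \<omega> \<partial>M) = 0"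
    by (rule N_orth[OF Zm kn Zb])
  have e: "indicator Bs \<omega> * (N m n \<omega>)\<^sup>2 = indicator Bs \<omega> * (N m k \<omega>)\<^sup>2
      + (2 * ((indicator Bs \<omega> * N m k \<omega>) * N k n \<omega>) + indicator Bs \<omega> * (N k n \<omega>)\<^sup>2)" for \<omega>
    using N_split[OF mk kn, of \<omega>] by (simp add: power2_eq_square algebra_simps)
  have i1: "integrable M (\<lambda>\<omega>. indicator Bs \<omega> * (N m k \<omega>)\<^sup>2)"
    by (rule bint[where B="(2 * real k)\<^sup>2"]) (measurable, intro sq_le' N_bd, assumption)
  have i2: "integrable M (\<lambda>\<omega>. (indicator Bs \<omega> * N m k \<omega>) * N k n \<omega>)"
  proof (rule bint[where B="(2 * real k) * (2 * real n)"])
    fix \<omega> assume w: "\<omega> \<in> space M"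
    show "\<bar>indicator Bs \<omega> * N m k \<omega> * N k n \<omega>\<bar> \<le> 2 * real k * (2 * real n)"
      unfolding abs_mult[of _ "N k n \<omega>"] using Zb[OF w] N_bd[OF w, of k n] by (intro mult_mono) auto
  qed measurable
  have i3: "integrable M (\<lambda>\<omega>. indicator Bs \<omega> * (N k n \<omega>)\<^sup>2)"
    by (rule bint[where B="(2 * real n)\<^sup>2"]) (measurable, intro sq_le' N_bd, assumption)
  have "(\<integral>\<omega>. indicator Bs \<omega> * (N m n \<omega>)\<^sup>2 \<partial>M) = (\<integral>\<omega>. indicator Bs \<omega> * (N m k \<omega>)\<^sup>2 \<partial>M)
     + (2 * (\<integral>\<omega>. (indicator Bs \<omega> * N m k \<omega>) * N k n \<omega> \<partial>M) + (\<integral>\<omega>. indicator Bs \<omega> * (N k n \<omega>)\<^sup>2 \<partial>M))"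
    unfolding e using i1 i2 i3 by simp
  moreover have "0 \<le> (\<integral>\<omega>. indicator Bs \<omega> * (N k n \<omega>)\<^sup>2 \<partial>M)"
    by (rule integral_nonneg_AE) auto
  ultimately show ?thesis using o by simp
qed

lemma N_sq_sum: "m \<le> n \<Longrightarrow> (\<integral>\<omega>. (N m n \<omega>)\<^sup>2 \<partial>M) = (\<Sum>s\<in>{m..<n}. (\<integral>\<omega>. (D s \<omega>)\<^sup>2 \<partial>M))"
proof (induction n rule: dec_induct)
  case base
  then show ?case by (simp add: N_def)
next
  case (step n)
  have e: "N m (Suc n) \<omega> = N m n \<omega> + D n \<omega>" for \<omega>
    using step(1) unfolding N_def by simp
  have i1: "integrable M (\<lambda>\<omega>. (N m n \<omega>)\<^sup>2)"
    by (rule bint[where B="(2 * real n)\<^sup>2"]) (measurable, intro sq_le N_bd, assumption)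
  have i2: "integrable M (\<lambda>\<omega>. N m n \<omega> * D n \<omega>)"
  proof (rule bint[where B="(2 * real n) * 2"])
    fix \<omega> assume w: "\<omega> \<in> space M"
    show "\<bar>N m n \<omega> * D n \<omega>\<bar> \<le> 2 * real n * 2"
      unfolding abs_mult using N_bd[OF w, of m n] D_bd[OF w, of n] by (intro mult_mono) auto
  qed measurable
  have i3: "integrable M (\<lambda>\<omega>. (D n \<omega>)\<^sup>2)"
    by (rule bint[where B="2\<^sup>2"]) (measurable, intro sq_le D_bd, assumption)
  have o: "(\<integral>\<omega>. N m n \<omega> * D n \<omega> \<partial>M) = 0"
    by (rule D_orth[OF N_meas order_refl, where B="2 * real n"]) (rule N_bd)
  have "(\<integral>\<omega>. (N m (Suc n) \<omega>)\<^sup>2 \<partial>M) = (\<integral>\<omega>. (N m n \<omega>)\<^sup>2 + (2 * (N m n \<omega> * D n \<omega>) + (D n \<omega>)\<^sup>2) \<partial>M)"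
    unfolding e by (simp add: power2_eq_square algebra_simps)
  also have "\<dots> = (\<integral>\<omega>. (N m n \<omega>)\<^sup>2 \<partial>M) + (2 * (\<integral>\<omega>. N m n \<omega> * D n \<omega> \<partial>M) + (\<integral>\<omega>. (D n \<omega>)\<^sup>2 \<partial>M))"
    using i1 i2 i3 by simp
  finally show ?case using o step(3) step(1) by simp
qed

lemma maximal:
  assumes e: "\<epsilon> > 0" and mn: "m \<le> n"
  shows "\<epsilon>\<^sup>2 * measure M {\<omega>\<in>space M. \<exists>k\<in>{m..n}. \<epsilon> \<le> \<bar>N m k \<omega>\<bar>} \<le> (\<integral>\<omega>. (N m n \<omega>)\<^sup>2 \<partial>M)"
proof -
  define Bk where "Bk k = {\<omega>\<in>space M. \<epsilon> \<le> \<bar>N m k \<omega>\<bar> \<and> (\<forall>j\<in>{m..<k}. \<bar>N m j \<omega>\<bar> < \<epsilon>)}" for k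
  have Bs: "Bk k \<in> sets (F k)" for k
  proof -
    have [measurable]: "N m k \<in> borel_measurable (F k)" by (rule N_meas)
    have [measurable]: "space M \<in> sets (F k)" using sets.top[of "F k"] spaceF by simp
    have [measurable]: "Measurable.pred (F k) (\<lambda>\<omega>. \<forall>j\<in>{m..<k}. \<bar>N m j \<omega>\<bar> < \<epsilon>)"
    proof (rule pred_intros_finite(3))
      fix j assume "j \<in> {m..<k}"
      then have [measurable]: "N m j \<in> borel_measurable (F k)" using meas_mono[OF _ N_meas[of m j], of k] by auto
      show "Measurable.pred (F k) (\<lambda>\<omega>. \<bar>N m j \<omega>\<bar> < \<epsilon>)" by measurable
    qed simp
    show ?thesis unfolding Bk_def by measurable
  qed
  have BsM[measurable]: "Bk k \<in> sets M" for k using setsM[OF Bs] .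
  have disj: "disjoint_family_on Bk {m..n}"
    unfolding disjoint_family_on_def
  proof (intro ballI impI)
    fix k k' assume k: "k \<in> {m..n}" "k' \<in> {m..n}" "k \<noteq> k'"
    show "Bk k \<inter> Bk k' = {}"
    proof (cases "k < k'")
      case True then show ?thesis using k unfolding Bk_def by force
    next
      case False then have "k' < k" using k by simp
      then show ?thesis using k unfolding Bk_def by force
    qed
  qed
  define E where "E = {\<omega>\<in>space M. \<exists>k\<in>{m..n}. \<epsilon> \<le> \<bar>N m k \<omega>\<bar>}"
  have EU: "E = (\<Union>k\<in>{m..n}. Bk k)"
  proof
    show "(\<Union>k\<in>{m..n}. Bk k) \<subseteq> E" unfolding E_def Bk_def by auto
    show "E \<subseteq> (\<Union>k\<in>{m..n}. Bk k)"
    proof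
      fix \<omega> assume w: "\<omega> \<in> E"
      define P where "P k = (k \<in> {m..n} \<and> \<epsilon> \<le> \<bar>N m k \<omega>\<bar>)" for k
      have ex: "\<exists>k. P k" using w unfolding E_def P_def by auto
      define k0 where "k0 = (LEAST k. P k)"
      have Pk0: "P k0" unfolding k0_def using LeastI_ex[OF ex] .
      have "\<bar>N m j \<omega>\<bar> < \<epsilon>" if "j \<in> {m..<k0}" for j
      proof -
        have "\<not> P j" unfolding k0_def using that not_less_Least[of j P] unfolding k0_def by auto
        then show ?thesis using that Pk0 unfolding P_def by auto
      qed
      then have "\<omega> \<in> Bk k0" using w Pk0 unfolding Bk_def E_def P_def by auto
      then show "\<omega> \<in> (\<Union>k\<in>{m..n}. Bk k)" using Pk0 unfolding P_def by auto
    qed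
  qed
  have mE: "measure M E = (\<Sum>k\<in>{m..n}. measure M (Bk k))"
    unfolding EU by (rule measure_finite_Union) (use disj in \<open>auto simp: emeasure_eq_measure\<close>)
  have step: "\<epsilon>\<^sup>2 * measure M (Bk k) \<le> (\<integral>\<omega>. indicator (Bk k) \<omega> * (N m n \<omega>)\<^sup>2 \<partial>M)" if k: "k \<in> {m..n}" for k
  proof -
    have "\<epsilon>\<^sup>2 * measure M (Bk k) = (\<integral>\<omega>. indicator (Bk k) \<omega> * \<epsilon>\<^sup>2 \<partial>M)"
      using sets.sets_into_space[OF BsM[of k]] by (simp add: Int_absorb2)
    also have "\<dots> \<le> (\<integral>\<omega>. indicator (Bk k) \<omega> * (N m k \<omega>)\<^sup>2 \<partial>M)"
    proof (rule integral_mono)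
      show "integrable M (\<lambda>\<omega>. indicator (Bk k) \<omega> * \<epsilon>\<^sup>2)"
        by (rule bint[where B="\<epsilon>\<^sup>2"]) (auto simp: indicator_def)
      show "integrable M (\<lambda>\<omega>. indicator (Bk k) \<omega> * (N m k \<omega>)\<^sup>2)"
        by (rule bint[where B="(2 * real k)\<^sup>2"]) (measurable, intro sq_le' N_bd, assumption)
      fix \<omega> assume "\<omega> \<in> space M"
      show "indicator (Bk k) \<omega> * \<epsilon>\<^sup>2 \<le> indicator (Bk k) \<omega> * (N m k \<omega>)\<^sup>2"
      proof (cases "\<omega> \<in> Bk k")
        case True
        then have "\<epsilon> \<le> \<bar>N m k \<omega>\<bar>" unfolding Bk_def by auto
        then have "\<epsilon>\<^sup>2 \<le> \<bar>N m k \<omega>\<bar>\<^sup>2" using e by (intro power_mono) auto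
        then show ?thesis using True by simp
      qed simp
    qed
    also have "\<dots> \<le> (\<integral>\<omega>. indicator (Bk k) \<omega> * (N m n \<omega>)\<^sup>2 \<partial>M)"
      by (rule N_sq_mono[OF _ _ Bs]) (use k in auto)
    finally show ?thesis .
  qed
  have "\<epsilon>\<^sup>2 * measure M E \<le> (\<Sum>k\<in>{m..n}. (\<integral>\<omega>. indicator (Bk k) \<omega> * (N m n \<omega>)\<^sup>2 \<partial>M))"
    unfolding mE sum_distrib_left by (rule sum_mono) (rule step)
  also have "\<dots> = (\<integral>\<omega>. (\<Sum>k\<in>{m..n}. indicator (Bk k) \<omega>) * (N m n \<omega>)\<^sup>2 \<partial>M)"
    unfolding sum_distrib_right
    by (rule Bochner_Integration.integral_sum[symmetric])
       (rule bint[where B="(2 * real n)\<^sup>2"], measurable, intro sq_le' N_bd, assumption)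
  also have "\<dots> = (\<integral>\<omega>. indicator E \<omega> * (N m n \<omega>)\<^sup>2 \<partial>M)"
  proof -
    have h: "(indicator (\<Union>(Bk ` {m..n})) x :: real) = (\<Sum>y\<in>{m..n}. indicator (Bk y) x)" for x
      by (rule indicator_UN_disjoint[OF _ disj]) simp
    show ?thesis unfolding EU h ..
  qed
  also have "\<dots> \<le> (\<integral>\<omega>. (N m n \<omega>)\<^sup>2 \<partial>M)"
  proof (rule integral_mono)
    show "integrable M (\<lambda>\<omega>. indicator E \<omega> * (N m n \<omega>)\<^sup>2)"
      unfolding EU by (rule bint[where B="(2 * real n)\<^sup>2"]) (measurable, intro sq_le' N_bd, assumption)
    show "integrable M (\<lambda>\<omega>. (N m n \<omega>)\<^sup>2)"
      by (rule bint[where B="(2 * real n)\<^sup>2"]) (measurable, intro sq_le N_bd, assumption)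
  qed (auto simp: indicator_def)
  finally show ?thesis unfolding E_def .
qed

lemma V_measM[measurable]: "V t \<in> borel_measurable M"
  using measM[OF Vm] .

lemma Dsq_le: "(\<integral>\<omega>. (D t \<omega>)\<^sup>2 \<partial>M) \<le> (\<integral>\<omega>. (V (Suc t) \<omega>)\<^sup>2 \<partial>M) - (\<integral>\<omega>. (V t \<omega>)\<^sup>2 \<partial>M)"
proof -
  have ic: "integrable M (\<lambda>\<omega>. c t \<omega> * c t \<omega>)"
    by (rule bint[where B=1]) (use c_bd in \<open>auto simp: abs_le_iff intro: mult_le_one\<close>)
  have icd: "integrable M (\<lambda>\<omega>. c t \<omega> * dV t \<omega>)"
  proof (rule bint[where B="1*1"])
    fix \<omega> assume "\<omega> \<in> space M"
    then show "\<bar>c t \<omega> * dV t \<omega>\<bar> \<le> 1 * 1" unfolding abs_mult using c_bd[of t \<omega>] dV_bd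
      by (intro mult_mono) auto
  qed measurable
  have idd: "integrable M (\<lambda>\<omega>. dV t \<omega> * dV t \<omega>)"
  proof (rule bint[where B="1*1"])
    fix \<omega> assume "\<omega> \<in> space M"
    then show "\<bar>dV t \<omega> * dV t \<omega>\<bar> \<le> 1 * 1" unfolding abs_mult using dV_bd
      by (intro mult_mono) auto
  qed measurable
  have cc: "(\<integral>\<omega>. c t \<omega> * c t \<omega> \<partial>M) = (\<integral>\<omega>. c t \<omega> * dV t \<omega> \<partial>M)"
    by (rule c_int_eq[OF c_meas, where B=1]) (use c_bd in \<open>auto simp: abs_le_iff\<close>)
  have "(\<integral>\<omega>. (D t \<omega>)\<^sup>2 \<partial>M) = (\<integral>\<omega>. dV t \<omega> * dV t \<omega> - 2 * (c t \<omega> * dV t \<omega>) + c t \<omega> * c t \<omega> \<partial>M)"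
    unfolding D_def by (simp add: power2_eq_square algebra_simps)
  also have "\<dots> = (\<integral>\<omega>. dV t \<omega> * dV t \<omega> \<partial>M) - (\<integral>\<omega>. c t \<omega> * c t \<omega> \<partial>M)"
    using ic icd idd cc by simp
  also have "\<dots> \<le> (\<integral>\<omega>. dV t \<omega> * dV t \<omega> \<partial>M)"
    by (simp add: integral_nonneg_AE)
  also have "\<dots> = (\<integral>\<omega>. (V (Suc t) \<omega>)\<^sup>2 - (V t \<omega>)\<^sup>2 - 2 * (V t \<omega> * dV t \<omega>) \<partial>M)"
    unfolding dV_def by (rule Bochner_Integration.integral_cong) (auto simp: power2_eq_square algebra_simps)
  also have "\<dots> = (\<integral>\<omega>. (V (Suc t) \<omega>)\<^sup>2 \<partial>M) - (\<integral>\<omega>. (V t \<omega>)\<^sup>2 \<partial>M) - 2 * (\<integral>\<omega>. V t \<omega> * dV t \<omega> \<partial>M)"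
  proof -
    have i1: "integrable M (\<lambda>\<omega>. (V s \<omega>)\<^sup>2)" for s
      by (rule bint[where B=1]) (use V01 in \<open>auto simp: power_le_one abs_le_iff\<close>)
    have i3: "integrable M (\<lambda>\<omega>. V t \<omega> * dV t \<omega>)"
    proof (rule bint[where B="1*1"])
      fix \<omega> assume "\<omega> \<in> space M"
      then show "\<bar>V t \<omega> * dV t \<omega>\<bar> \<le> 1 * 1" unfolding abs_mult using dV_bd V01
        by (intro mult_mono) auto
    qed measurable
    show ?thesis using i1 i3 by simp
  qed
  also have "\<dots> \<le> (\<integral>\<omega>. (V (Suc t) \<omega>)\<^sup>2 \<partial>M) - (\<integral>\<omega>. (V t \<omega>)\<^sup>2 \<partial>M)"
    using weak[OF Vm V01] unfolding dV_def by simp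
  finally show ?thesis .
qed

definition "Dsq t = (\<integral>\<omega>. (D t \<omega>)\<^sup>2 \<partial>M)"

lemma Dsq_nonneg: "0 \<le> Dsq t"
  unfolding Dsq_def by (rule integral_nonneg_AE) auto

lemma Dsq_partial: "(\<Sum>t<n. Dsq t) \<le> 1"
proof -
  have "(\<Sum>t<n. Dsq t) \<le> (\<Sum>t<n. (\<integral>\<omega>. (V (Suc t) \<omega>)\<^sup>2 \<partial>M) - (\<integral>\<omega>. (V t \<omega>)\<^sup>2 \<partial>M))"
    unfolding Dsq_def by (rule sum_mono) (rule Dsq_le)
  also have "\<dots> = (\<integral>\<omega>. (V n \<omega>)\<^sup>2 \<partial>M) - (\<integral>\<omega>. (V 0 \<omega>)\<^sup>2 \<partial>M)"
    by (rule sum_lessThan_telescope)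
  also have "\<dots> \<le> 1 - 0"
  proof (rule diff_mono)
    have "(\<integral>\<omega>. (V n \<omega>)\<^sup>2 \<partial>M) \<le> (\<integral>\<omega>. 1 \<partial>M)"
    proof (rule integral_mono)
      show "integrable M (\<lambda>\<omega>. (V n \<omega>)\<^sup>2)"
        by (rule bint[where B=1]) (use V01 in \<open>auto simp: power_le_one abs_le_iff\<close>)
    qed (use V01 in \<open>auto simp: power_le_one\<close>)
    then show "(\<integral>\<omega>. (V n \<omega>)\<^sup>2 \<partial>M) \<le> 1" by (simp add: prob_space)
    show "0 \<le> (\<integral>\<omega>. (V 0 \<omega>)\<^sup>2 \<partial>M)" by (rule integral_nonneg_AE) auto
  qed
  finally show ?thesis by simp
qed

lemma Dsq_summable: "summable Dsq"
  by (rule summableI_nonneg_bounded[OF Dsq_nonneg Dsq_partial])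

lemma tail_bound:
  assumes e: "\<epsilon> > 0"
  shows "measure M {\<omega>\<in>space M. \<exists>k\<ge>m. \<epsilon> \<le> \<bar>N m k \<omega>\<bar>} \<le> (\<Sum>i. Dsq (i + m)) / \<epsilon>\<^sup>2"
proof -
  define A where "A n = {\<omega>\<in>space M. \<exists>k\<in>{m..m+n}. \<epsilon> \<le> \<bar>N m k \<omega>\<bar>}" for n
  have "A n \<in> sets M" for n unfolding A_def by measurable
  then have As: "range A \<subseteq> sets M" by auto
  have inc: "incseq A" unfolding A_def incseq_def by force
  have U: "(\<Union>n. A n) = {\<omega>\<in>space M. \<exists>k\<ge>m. \<epsilon> \<le> \<bar>N m k \<omega>\<bar>}"
  proof
    show "(\<Union>n. A n) \<subseteq> {\<omega>\<in>space M. \<exists>k\<ge>m. \<epsilon> \<le> \<bar>N m k \<omega>\<bar>}" unfolding A_def by auto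
    show "{\<omega>\<in>space M. \<exists>k\<ge>m. \<epsilon> \<le> \<bar>N m k \<omega>\<bar>} \<subseteq> (\<Union>n. A n)"
    proof
      fix \<omega> assume "\<omega> \<in> {\<omega>\<in>space M. \<exists>k\<ge>m. \<epsilon> \<le> \<bar>N m k \<omega>\<bar>}"
      then obtain k where k: "\<omega> \<in> space M" "k \<ge> m" "\<epsilon> \<le> \<bar>N m k \<omega>\<bar>" by auto
      then have "\<omega> \<in> A (k - m)" unfolding A_def by (intro CollectI conjI bexI[of _ k]) auto
      then show "\<omega> \<in> (\<Union>n. A n)" by auto
    qed
  qed
  have bnd: "measure M (A n) \<le> (\<Sum>i. Dsq (i + m)) / \<epsilon>\<^sup>2" for n
  proof -
    have "\<epsilon>\<^sup>2 * measure M (A n) \<le> (\<integral>\<omega>. (N m (m+n) \<omega>)\<^sup>2 \<partial>M)"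
      unfolding A_def by (rule maximal[OF e]) simp
    also have "\<dots> = (\<Sum>s\<in>{m..<m+n}. Dsq s)" unfolding Dsq_def by (rule N_sq_sum) simp
    also have "\<dots> = (\<Sum>i\<in>{0..<n}. Dsq (i + m))"
      using sum.shift_bounds_nat_ivl[of Dsq 0 m n] by (simp add: add.commute)
    also have "\<dots> \<le> (\<Sum>i. Dsq (i + m))"
      by (rule sum_le_suminf) (use Dsq_summable summable_iff_shift[of Dsq m] Dsq_nonneg in auto)
    finally have "\<epsilon>\<^sup>2 * measure M (A n) \<le> (\<Sum>i. Dsq (i + m))" .
    then show ?thesis using e by (simp add: field_simps)
  qed
  have "(\<lambda>n. measure M (A n)) \<longlonglongrightarrow> measure M (\<Union>n. A n)"
    by (rule finite_Lim_measure_incseq[OF As inc])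
  then have "measure M (\<Union>n. A n) \<le> (\<Sum>i. Dsq (i + m)) / \<epsilon>\<^sup>2"
    by (rule LIMSEQ_le_const2) (use bnd in auto)
  then show ?thesis unfolding U .
qed

lemma ae_cauchy_eps:
  assumes e: "\<epsilon> > 0"
  shows "AE \<omega> in M. \<exists>m. \<forall>k\<ge>m. \<bar>N m k \<omega>\<bar> < \<epsilon>"
proof -
  define S where "S = {\<omega>\<in>space M. \<forall>m. \<exists>k\<ge>m. \<epsilon> \<le> \<bar>N m k \<omega>\<bar>}"
  have Ss[measurable]: "S \<in> sets M" unfolding S_def by measurable
  have le: "measure M S \<le> (\<Sum>i. Dsq (i + m)) / \<epsilon>\<^sup>2" for m
  proof -
    have "measure M S \<le> measure M {\<omega>\<in>space M. \<exists>k\<ge>m. \<epsilon> \<le> \<bar>N m k \<omega>\<bar>}"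
      by (rule finite_measure_mono) (unfold S_def, blast, measurable)
    also have "\<dots> \<le> (\<Sum>i. Dsq (i + m)) / \<epsilon>\<^sup>2" by (rule tail_bound[OF e])
    finally show ?thesis .
  qed
  have "(\<lambda>m. (\<Sum>i. Dsq (i + m)) / \<epsilon>\<^sup>2) \<longlonglongrightarrow> 0 / \<epsilon>\<^sup>2"
    using suminf_exist_split2[OF Dsq_summable] e by (intro tendsto_divide tendsto_const) auto
  then have lim0: "(\<lambda>m. (\<Sum>i. Dsq (i + m)) / \<epsilon>\<^sup>2) \<longlonglongrightarrow> 0" by simp
  have "measure M S \<le> 0"
    by (rule LIMSEQ_le_const[OF lim0]) (use le in auto)
  then have "emeasure M S = 0" by (simp add: emeasure_eq_measure measure_nonneg antisym)
  moreover have eq: "{\<omega>\<in>space M. \<not> (\<exists>m. \<forall>k\<ge>m. \<bar>N m k \<omega>\<bar> < \<epsilon>)} = S"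
    unfolding S_def by (simp add: not_less)
  ultimately show ?thesis using AE_iff_measurable[OF Ss eq] by simp
qed


theorem converges: "AE \<omega> in M. convergent (\<lambda>t. V t \<omega>)"
proof -
  have "AE \<omega> in M. \<forall>j::nat. \<exists>m. \<forall>k\<ge>m. \<bar>N m k \<omega>\<bar> < 1 / real (Suc j)"
    by (subst AE_all_countable) (intro allI ae_cauchy_eps, simp)
  then show ?thesis
  proof (rule AE_mp, intro AE_I2 impI)
    fix \<omega> assume w: "\<omega> \<in> space M" and H: "\<forall>j::nat. \<exists>m. \<forall>k\<ge>m. \<bar>N m k \<omega>\<bar> < 1 / real (Suc j)"
    define S where "S n = N 0 n \<omega>" for n
    have NS: "N m k \<omega> = S k - S m" if "m \<le> k" for m k
      using N_split[of 0 m k \<omega>] that unfolding S_def by simp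
    have "Cauchy S"
    proof (rule metric_CauchyI)
      fix e :: real assume e: "e > 0"
      obtain j :: nat where j: "1 / real (Suc j) < e / 2"
        using reals_Archimedean[of "e/2"] e by (auto simp: field_simps)
      obtain m where m: "\<forall>k\<ge>m. \<bar>N m k \<omega>\<bar> < 1 / real (Suc j)" using H by blast
      show "\<exists>M. \<forall>p\<ge>M. \<forall>q\<ge>M. dist (S p) (S q) < e"
      proof (intro exI allI impI)
        fix p q assume "p \<ge> m" "q \<ge> m"
        have "\<bar>S p - S m\<bar> < e/2" using m[rule_format, OF \<open>p \<ge> m\<close>] j NS[OF \<open>p \<ge> m\<close>] by linarith
        moreover have "\<bar>S q - S m\<bar> < e/2" using m[rule_format, OF \<open>q \<ge> m\<close>] j NS[OF \<open>q \<ge> m\<close>] by linarith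
        ultimately show "dist (S p) (S q) < e" unfolding dist_real_def by linarith
      qed
    qed
    then have cS: "convergent S" by (rule Cauchy_convergent)
    then obtain K where K: "\<And>n. \<bar>S n\<bar> \<le> K"
      using convergent_imp_Bseq[OF cS] unfolding Bseq_def by (metis real_norm_def less_imp_le)
    define Ac where "Ac n = (\<Sum>s<n. c s \<omega>)" for n
    have VA: "V n \<omega> = V 0 \<omega> + S n + Ac n" for n
    proof -
      have "V n \<omega> - V 0 \<omega> = (\<Sum>s<n. dV s \<omega>)"
        unfolding dV_def by (rule sum_lessThan_telescope[symmetric])
      also have "\<dots> = (\<Sum>s<n. D s \<omega>) + Ac n"
        unfolding Ac_def D_def by (simp add: sum.distrib[symmetric])
      finally show ?thesis unfolding S_def N_def by (simp add: atLeast0LessThan)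
    qed
    have "incseq Ac" unfolding Ac_def by (rule incseq_SucI) (simp add: c_bd)
    moreover have "\<forall>n. Ac n \<le> 1 + K"
    proof
      fix n
      have "Ac n = V n \<omega> - V 0 \<omega> - S n" using VA[of n] by simp
      then show "Ac n \<le> 1 + K" using V01[OF w, of n] V01[OF w, of 0] K[of n] by auto
    qed
    ultimately obtain L where "Ac \<longlonglongrightarrow> L" using incseq_convergent by blast
    then have "convergent Ac" by (auto simp: convergent_def)
    then have "convergent (\<lambda>n. V 0 \<omega> + S n + Ac n)"
      by (intro convergent_add convergent_const cS)
    then show "convergent (\<lambda>t. V t \<omega>)" unfolding VA[symmetric] .
  qed
qed

end


abbreviation "Vr \<theta> r \<equiv> exp_reward (softmax \<theta>) r"

lemma upd_true: "rhat_true \<theta> r a0 b - baseline \<theta> r a0 b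
   = Vr \<theta> r + (if b = a0 then (r a0 - Vr \<theta> r) / softmax \<theta> a0 else 0)"
  using softmax_pos[of \<theta> a0] unfolding rhat_true_def baseline_def
  by (auto simp: field_simps)

lemma upd_obs: "rhat_obs \<theta> x a0 b - baseline \<theta> r a0 b
   = Vr \<theta> r + (if b = a0 then (x - Vr \<theta> r) / softmax \<theta> a0 else 0)"
  using softmax_pos[of \<theta> a0] unfolding rhat_obs_def baseline_def
  by (auto simp: field_simps)

lemma upd_form: fixes \<theta> :: "'a \<Rightarrow> real" shows "(\<lambda>b. \<theta> b + k * (W + (if b = a0 then y else 0))) = (\<lambda>b. \<theta> b + k * W + (if b = a0 then k * y else 0))"
  by (rule ext) (auto simp: algebra_simps)

lemma case_i_step:
  fixes \<theta> :: "'a::finite \<Rightarrow> real"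
  assumes "\<eta> > 0"
  shows "Vr (\<lambda>b. \<theta> b + \<eta> * (rhat_true \<theta> r a0 b - baseline \<theta> r a0 b)) r \<ge> Vr \<theta> r"
proof -
  define p where "p = softmax \<theta> a0"
  define \<delta> where "\<delta> = r a0 - Vr \<theta> r"
  define \<Delta> where "\<Delta> = \<eta> * (\<delta> / p)"
  have p: "p > 0" "p \<le> 1" unfolding p_def using softmax_pos softmax_le1 by auto
  have eq: "(\<lambda>b. \<theta> b + \<eta> * (rhat_true \<theta> r a0 b - baseline \<theta> r a0 b))
      = (\<lambda>b. \<theta> b + \<eta> * Vr \<theta> r + (if b = a0 then \<Delta> else 0))"
    unfolding upd_true upd_form \<Delta>_def \<delta>_def p_def ..
  have d: "Vr (\<lambda>b. \<theta> b + \<eta> * Vr \<theta> r + (if b = a0 then \<Delta> else 0)) r - Vr \<theta> r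
     = p * (exp \<Delta> - 1) / (1 + p * (exp \<Delta> - 1)) * \<delta>"
    unfolding p_def \<delta>_def by (rule key_update)
  have den: "1 + p * (exp \<Delta> - 1) > 0"
  proof -
    have "p * (exp \<Delta> - 1) > -1"
    proof (cases "exp \<Delta> - 1 \<ge> 0")
      case True then show ?thesis using p by (smt (verit) mult_nonneg_nonneg)
    next
      case False
      then have "p * (exp \<Delta> - 1) \<ge> 1 * (exp \<Delta> - 1)" using p by (intro mult_right_mono_neg) auto
      then show ?thesis by (smt (verit) exp_gt_zero)
    qed
    then show ?thesis by simp
  qed
  have "(exp \<Delta> - 1) * \<delta> \<ge> 0"
  proof (cases "\<delta> \<ge> 0")
    case True
    then have "\<Delta> \<ge> 0" unfolding \<Delta>_def using assms p by simp
    then show ?thesis using True by simp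
  next
    case False
    then have "\<Delta> \<le> 0" unfolding \<Delta>_def using assms p by (simp add: mult_nonneg_nonpos divide_nonpos_pos)
    then have "exp \<Delta> - 1 \<le> 0" by simp
    then show ?thesis using False by (simp add: mult_nonpos_nonpos)
  qed
  then have "p * (exp \<Delta> - 1) / (1 + p * (exp \<Delta> - 1)) * \<delta> \<ge> 0"
    using p den by (simp add: mult.assoc divide_simps mult_nonneg_nonneg)
  then show ?thesis unfolding eq using d by simp
qed

definition "kap R \<theta> r a = \<bar>r a - Vr \<theta> r\<bar> / (8 * R\<^sup>2)"
definition "uf R \<theta> r a = softmax \<theta> a * (r a - Vr \<theta> r) * kap R \<theta> r a"
definition "vf R \<theta> r a = softmax \<theta> a * \<bar>r a - Vr \<theta> r\<bar> * (kap R \<theta> r a)\<^sup>2"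
definition "qc R \<theta> r a j = (if j = (0::nat) then - (uf R \<theta> r a * Vr \<theta> r) - vf R \<theta> r a * (Vr \<theta> r)\<^sup>2
   else if j = 1 then uf R \<theta> r a + 2 * vf R \<theta> r a * Vr \<theta> r else - vf R \<theta> r a)"
definition "Qf R \<theta> r a x = (\<Sum>j<3. qc R \<theta> r a j * x ^ j)"

lemma Qf_eq: "Qf R \<theta> r a x = uf R \<theta> r a * (x - Vr \<theta> r) - vf R \<theta> r a * (x - Vr \<theta> r)\<^sup>2"
  unfolding Qf_def qc_def by (simp add: numeral_3_eq_3 power2_eq_square algebra_simps)

lemma case_ii_step:
  fixes \<theta> :: "'a::finite \<Rightarrow> real"
  assumes R: "R > 0" and r: "\<And>a. 0 \<le> r a" "\<And>a. r a \<le> 1" "\<And>a. r a \<le> R" and x: "\<bar>x\<bar> \<le> R"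
  shows "Vr (\<lambda>b. \<theta> b + eta_obs \<theta> r R a0 * (rhat_obs \<theta> x a0 b - baseline \<theta> r a0 b)) r - Vr \<theta> r \<ge> Qf R \<theta> r a0 x"
proof -
  define p where "p = softmax \<theta> a0"
  define V where "V = Vr \<theta> r"
  define \<delta> where "\<delta> = r a0 - V"
  define \<kappa> where "\<kappa> = \<bar>\<delta>\<bar> / (8 * R\<^sup>2)"
  define \<Delta> where "\<Delta> = \<kappa> * (x - V)"
  have p: "p > 0" "p \<le> 1" unfolding p_def using softmax_pos softmax_le1 by auto
  have V: "0 \<le> V" "V \<le> R" unfolding V_def using exp_reward_bounds[of 0 r R \<theta>] r by auto
  have eta: "eta_obs \<theta> r R a0 = p * \<kappa>" unfolding eta_obs_def p_def \<kappa>_def \<delta>_def V_def by simp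
  have eq: "(\<lambda>b. \<theta> b + eta_obs \<theta> r R a0 * (rhat_obs \<theta> x a0 b - baseline \<theta> r a0 b))
      = (\<lambda>b. \<theta> b + eta_obs \<theta> r R a0 * V + (if b = a0 then \<Delta> else 0))"
    unfolding upd_obs upd_form eta \<Delta>_def V_def p_def using p unfolding p_def by auto
  have d: "Vr (\<lambda>b. \<theta> b + eta_obs \<theta> r R a0 * V + (if b = a0 then \<Delta> else 0)) r - V
     = p * (exp \<Delta> - 1) / (1 + p * (exp \<Delta> - 1)) * \<delta>"
    unfolding p_def \<delta>_def V_def by (rule key_update)
  have dabs: "\<bar>\<delta>\<bar> \<le> R" unfolding \<delta>_def using V r[of a0] by auto
  have xv: "\<bar>x - V\<bar> \<le> 2 * R" using x V by auto
  have "\<bar>\<Delta>\<bar> = \<bar>\<delta>\<bar> * \<bar>x - V\<bar> / (8 * R\<^sup>2)" unfolding \<Delta>_def \<kappa>_def by (simp add: abs_mult)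
  also have "\<dots> \<le> R * (2 * R) / (8 * R\<^sup>2)"
    using R by (intro divide_right_mono mult_mono dabs xv) auto
  also have "\<dots> \<le> 1" using R by (simp add: power2_eq_square field_simps)
  finally have D1: "\<bar>\<Delta>\<bar> \<le> 1" .
  have "p * (exp \<Delta> - 1) / (1 + p * (exp \<Delta> - 1)) * \<delta> \<ge> p * \<delta> * \<Delta> - p * \<bar>\<delta>\<bar> * \<Delta>\<^sup>2"
    by (rule dV_lower[OF p D1])
  moreover have "p * \<delta> * \<Delta> - p * \<bar>\<delta>\<bar> * \<Delta>\<^sup>2 = Qf R \<theta> r a0 x"
    unfolding Qf_eq uf_def vf_def kap_def \<Delta>_def \<kappa>_def p_def \<delta>_def V_def
    by (simp add: power2_eq_square algebra_simps)
  ultimately show ?thesis unfolding eq using d V_def by simp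
qed

lemma exp_bound_expect:
  fixes \<theta> :: "'a::finite \<Rightarrow> real"
  assumes R: "R > 0" and r: "\<And>a. 0 \<le> r a" "\<And>a. r a \<le> 1" "\<And>a. r a \<le> R" and m2: "m2 \<le> R\<^sup>2"
  shows "qc R \<theta> r a 0 + qc R \<theta> r a 1 * r a + qc R \<theta> r a 2 * m2 \<ge> 0"
proof -
  define p where "p = softmax \<theta> a"
  define V where "V = Vr \<theta> r"
  define \<delta> where "\<delta> = r a - V"
  define \<kappa> where "\<kappa> = \<bar>\<delta>\<bar> / (8 * R\<^sup>2)"
  have p: "p > 0" "p \<le> 1" unfolding p_def using softmax_pos softmax_le1 by auto
  have V: "0 \<le> V" "V \<le> R" unfolding V_def using exp_reward_bounds[of 0 r R \<theta>] r by auto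
  have k: "\<kappa> \<ge> 0" unfolding \<kappa>_def by simp
  have "qc R \<theta> r a 0 + qc R \<theta> r a 1 * r a + qc R \<theta> r a 2 * m2
      = p * \<delta> * \<kappa> * \<delta> - p * \<bar>\<delta>\<bar> * \<kappa>\<^sup>2 * (m2 - 2 * V * r a + V\<^sup>2)"
  proof -
    have u: "uf R \<theta> r a = p * \<delta> * \<kappa>" unfolding uf_def kap_def p_def \<delta>_def \<kappa>_def V_def ..
    have v: "vf R \<theta> r a = p * \<bar>\<delta>\<bar> * \<kappa>\<^sup>2" unfolding vf_def kap_def p_def \<delta>_def \<kappa>_def V_def ..
    have ra: "r a = \<delta> + V" unfolding \<delta>_def by simp
    show ?thesis unfolding qc_def u v V_def[symmetric] unfolding ra
      by (simp add: power2_eq_square algebra_simps)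
  qed
  also have "\<dots> \<ge> p * \<delta> * \<kappa> * \<delta> - p * \<bar>\<delta>\<bar> * \<kappa>\<^sup>2 * (2 * R\<^sup>2)"
  proof -
    have "m2 - 2 * V * r a + V\<^sup>2 \<le> 2 * R\<^sup>2"
    proof -
      have "V\<^sup>2 \<le> R\<^sup>2" using V by (intro power_mono) auto
      moreover have "0 \<le> V * r a" using V r by simp
      ultimately show ?thesis using m2 by simp
    qed
    moreover have "0 \<le> p * \<bar>\<delta>\<bar> * \<kappa>\<^sup>2" using p by simp
    ultimately show ?thesis by (simp add: mult_left_mono)
  qed
  finally have 1: "qc R \<theta> r a 0 + qc R \<theta> r a 1 * r a + qc R \<theta> r a 2 * m2 \<ge> p * \<delta> * \<kappa> * \<delta> - p * \<bar>\<delta>\<bar> * \<kappa>\<^sup>2 * (2 * R\<^sup>2)" .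
  have "p * \<delta> * \<kappa> * \<delta> - p * \<bar>\<delta>\<bar> * \<kappa>\<^sup>2 * (2 * R\<^sup>2) = p * \<bar>\<delta>\<bar>^3 / R\<^sup>2 * (1/8 - 1/32)"
    unfolding \<kappa>_def using R
    by (simp add: power2_eq_square power3_eq_cube field_simps abs_mult_self_eq)
  also have "\<dots> \<ge> 0" using p R by simp
  finally show ?thesis using 1 by simp
qed



definition "clip Rm x = max (- Rm) (min Rm (x::real))"

lemma clip_bd: "Rm \<ge> 0 \<Longrightarrow> \<bar>clip Rm x\<bar> \<le> Rm" unfolding clip_def by auto

lemma clip_meas[measurable]: "clip Rm \<in> borel_measurable borel" unfolding clip_def by measurable

lemma qc_bd:
  fixes \<theta> :: "'a::finite \<Rightarrow> real"
  assumes R: "R > 0" and r: "\<And>a. 0 \<le> r a" "\<And>a. r a \<le> 1"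
  shows "\<bar>qc R \<theta> r a j\<bar> \<le> 1 / (8 * R\<^sup>2) + 2 * (1 / (8 * R\<^sup>2))\<^sup>2"
proof -
  define K where "K = 1 / (8 * R\<^sup>2)"
  define p where "p = softmax \<theta> a"
  define V where "V = Vr \<theta> r"
  define \<delta> where "\<delta> = r a - V"
  have K0: "K \<ge> 0" unfolding K_def by simp
  have p: "p > 0" "p \<le> 1" unfolding p_def using softmax_pos softmax_le1 by auto
  have V: "0 \<le> V" "V \<le> 1" unfolding V_def using exp_reward_bounds[of 0 r 1 \<theta>] r by auto
  have d: "\<bar>\<delta>\<bar> \<le> 1" unfolding \<delta>_def using V r[of a] by auto
  have k: "kap R \<theta> r a = \<bar>\<delta>\<bar> * K" unfolding kap_def K_def \<delta>_def V_def by simp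
  have k0: "0 \<le> kap R \<theta> r a" "kap R \<theta> r a \<le> K" unfolding k using d K0 by (auto simp: mult_left_le_one_le)
  have "\<bar>uf R \<theta> r a\<bar> = p * \<bar>\<delta>\<bar> * kap R \<theta> r a" unfolding uf_def p_def \<delta>_def V_def using p k0
    by (simp add: abs_mult p_def)
  also have "\<dots> \<le> 1 * 1 * K" using p d k0 by (intro mult_mono) auto
  finally have u: "\<bar>uf R \<theta> r a\<bar> \<le> K" by simp
  have "\<bar>vf R \<theta> r a\<bar> = p * \<bar>\<delta>\<bar> * (kap R \<theta> r a)\<^sup>2" unfolding vf_def p_def \<delta>_def V_def using p k0
    by (simp add: abs_mult p_def)
  also have "\<dots> \<le> 1 * 1 * K\<^sup>2" using p d k0 by (intro mult_mono power_mono) auto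
  finally have v: "\<bar>vf R \<theta> r a\<bar> \<le> K\<^sup>2" by simp
  have VV: "\<bar>Vr \<theta> r\<bar> \<le> 1" "\<bar>(Vr \<theta> r)\<^sup>2\<bar> \<le> 1" using V unfolding V_def by (auto simp: power_le_one abs_le_iff)
  have m1: "\<bar>uf R \<theta> r a * Vr \<theta> r\<bar> \<le> K" using u VV K0 unfolding abs_mult
    by (metis abs_ge_zero mult.right_neutral mult_mono)
  have m2: "\<bar>vf R \<theta> r a * (Vr \<theta> r)\<^sup>2\<bar> \<le> K\<^sup>2" using v VV K0 unfolding abs_mult
    by (metis abs_ge_zero mult.right_neutral mult_mono zero_le_power2)
  have m3: "\<bar>vf R \<theta> r a * Vr \<theta> r\<bar> \<le> K\<^sup>2" using v VV K0 unfolding abs_mult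
    by (metis abs_ge_zero mult.right_neutral mult_mono zero_le_power2)
  have "\<bar>qc R \<theta> r a j\<bar> \<le> K + 2 * K\<^sup>2"
    unfolding qc_def using u v m1 m2 m3 K0 by (auto simp: abs_le_iff)
  then show ?thesis unfolding K_def .
qed

locale st = prob_space M for M :: "'w measure" +
  fixes F :: "nat \<Rightarrow> 'w measure"
    and A :: "nat \<Rightarrow> 'w \<Rightarrow> 'a::finite" and X :: "nat \<Rightarrow> 'w \<Rightarrow> real"
    and \<theta> :: "nat \<Rightarrow> 'w \<Rightarrow> 'a \<Rightarrow> real" and \<theta>0 :: "'a \<Rightarrow> real"
    and r :: "'a \<Rightarrow> real" and Rd :: "'a \<Rightarrow> real measure"
    and Rmax :: real
  assumes r01: "\<forall>a. r a \<in> {0..1}"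
    and Rpos: "Rmax > 0"
    and Rprob: "\<forall>a. prob_space (Rd a)"
    and Rsets: "\<forall>a. sets (Rd a) = sets borel"
    and Rsupp: "\<forall>a. AE x in Rd a. x \<in> {-Rmax..Rmax}"
    and Rmean: "\<forall>a. (\<integral>x. x \<partial>Rd a) = r a"
    and sub: "\<forall>t. subalgebra M (F t)"
    and Fmono: "\<forall>t. sets (F t) \<subseteq> sets (F (Suc t))"
    and Ameas: "\<forall>t. A t \<in> measurable (F (Suc t)) (count_space UNIV)"
    and Xmeas: "\<forall>t. X t \<in> borel_measurable (F (Suc t))"
    and init: "\<forall>\<omega>\<in>space M. \<theta> 0 \<omega> = \<theta>0"
    and ghyp: "\<forall>t a (g::real \<Rightarrow> real). g \<in> borel_measurable borel \<longrightarrow> bounded (range g) \<longrightarrow>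
             (AE \<omega> in M.
               real_cond_exp M (F t)
                 (\<lambda>\<omega>. indicator {\<omega>\<in>space M. A t \<omega> = a} \<omega> * g (X t \<omega>)) \<omega>
               = softmax (\<theta> t \<omega>) a * (\<integral>x. g x \<partial>Rd a))"
    and upd: "\<forall>t. \<forall>\<omega>\<in>space M. \<theta> (Suc t) \<omega> =
             (\<lambda>a. \<theta> t \<omega> a + eta_obs (\<theta> t \<omega>) r Rmax (A t \<omega>)
                      * (rhat_obs (\<theta> t \<omega>) (X t \<omega>) (A t \<omega>) a
                         - baseline (\<theta> t \<omega>) r (A t \<omega>) a))"
begin

lemma spaceF: "space (F t) = space M"
  using sub[rule_format, of t] unfolding subalgebra_def by simp

lemma meas_mono: "s \<le> t \<Longrightarrow> f \<in> borel_measurable (F s) \<Longrightarrow> f \<in> borel_measurable (F t)"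
proof -
  assume st: "s \<le> t" and f: "f \<in> borel_measurable (F s)"
  have "sets (F s) \<subseteq> sets (F t)" using st
  proof (induction t rule: dec_induct)
    case (step n) then show ?case using Fmono[rule_format, of n] by blast
  qed simp
  then show ?thesis by (intro measurable_from_subalg[of "F t" "F s", OF _ f]) (auto simp: subalgebra_def spaceF)
qed

lemma measM: "f \<in> borel_measurable (F s) \<Longrightarrow> f \<in> borel_measurable M"
  by (rule measurable_from_subalg[OF sub[rule_format]])

lemma Rint: "f \<in> borel_measurable borel \<Longrightarrow> (\<And>x. \<bar>f x\<bar> \<le> B) \<Longrightarrow> integrable (Rd a) (f :: real \<Rightarrow> real)"
proof -
  assume f: "f \<in> borel_measurable borel" and b: "\<And>x. \<bar>f x\<bar> \<le> B"
  interpret P: prob_space "Rd a" using Rprob by auto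
  have e: "borel_measurable (Rd a) = (borel_measurable borel :: (real \<Rightarrow> real) set)"
    by (rule measurable_cong_sets) (use Rsets in auto)
  have "f \<in> borel_measurable (Rd a)" using f e by simp
  then show ?thesis by (intro P.integrable_const_bound[where B=B]) (use b in auto)
qed

lemma Rmeas: "(f :: real \<Rightarrow> real) \<in> borel_measurable borel \<Longrightarrow> f \<in> borel_measurable (Rd a)"
proof -
  have e: "borel_measurable (Rd a) = (borel_measurable borel :: (real \<Rightarrow> real) set)"
    by (rule measurable_cong_sets) (use Rsets in auto)
  then show "f \<in> borel_measurable borel \<Longrightarrow> f \<in> borel_measurable (Rd a)" by simp
qed

lemma R0: "0 \<le> Rmax" using Rpos by simp

lemma sqle: "\<bar>x::real\<bar> \<le> b \<Longrightarrow> \<bar>x\<^sup>2\<bar> \<le> b\<^sup>2"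
  by (metis abs_ge_zero abs_power2 power2_abs power_mono)

lemma m1: "(\<integral>x. clip Rmax x \<partial>Rd a) = r a"
proof -
  have ae: "AE x in Rd a. clip Rmax x = x"
    using Rsupp[rule_format, of a] by eventually_elim (auto simp: clip_def)
  have "(\<integral>x. clip Rmax x \<partial>Rd a) = (\<integral>x. x \<partial>Rd a)"
    by (rule integral_cong_AE[OF Rmeas[OF clip_meas] Rmeas ae]) simp
  then show ?thesis using Rmean by simp
qed

lemma clip_sq_bd: "\<bar>(clip Rmax x)\<^sup>2\<bar> \<le> Rmax\<^sup>2"
  using Rpos by (intro sqle clip_bd) simp

lemma m2: "(\<integral>x. (clip Rmax x)\<^sup>2 \<partial>Rd a) \<le> Rmax\<^sup>2"
proof -
  interpret P: prob_space "Rd a" using Rprob by auto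
  have "(\<integral>x. (clip Rmax x)\<^sup>2 \<partial>Rd a) \<le> (\<integral>x. Rmax\<^sup>2 \<partial>Rd a)"
  proof (rule integral_mono)
    show "integrable (Rd a) (\<lambda>x. (clip Rmax x)\<^sup>2)"
      by (rule Rint[where B="Rmax\<^sup>2"]) (measurable, rule clip_sq_bd)
    show "integrable (Rd a) (\<lambda>x. Rmax\<^sup>2)" by simp
    fix x show "(clip Rmax x)\<^sup>2 \<le> Rmax\<^sup>2" using clip_sq_bd[of x] by simp
  qed
  then show ?thesis by (simp add: P.prob_space)
qed

lemma r_le: "r a \<le> Rmax"
proof -
  interpret P: prob_space "Rd a" using Rprob by auto
  have "r a = (\<integral>x. clip Rmax x \<partial>Rd a)" using m1 by simp
  also have "\<dots> \<le> (\<integral>x. Rmax \<partial>Rd a)"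
  proof (rule integral_mono)
    show "integrable (Rd a) (clip Rmax)"
      by (rule Rint[where B=Rmax]) (measurable, rule clip_bd[OF R0])
    show "integrable (Rd a) (\<lambda>x. Rmax)" by simp
    fix x show "clip Rmax x \<le> Rmax" unfolding clip_def using R0 by simp
  qed
  finally show ?thesis by (simp add: P.prob_space)
qed

lemma theta_meas: "(\<lambda>\<omega>. \<theta> t \<omega> b) \<in> borel_measurable (F t)"
proof (induction t arbitrary: b)
  case 0
  have "(\<lambda>\<omega>. \<theta> 0 \<omega> b) \<in> borel_measurable (F 0) \<longleftrightarrow> (\<lambda>\<omega>. \<theta>0 b) \<in> borel_measurable (F 0)"
    by (rule measurable_cong) (use init in \<open>auto simp: spaceF\<close>)
  then show ?case by simp
next
  case (Suc t)
  have th[measurable]: "(\<lambda>\<omega>. \<theta> t \<omega> b') \<in> borel_measurable (F (Suc t))" for b'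
    using meas_mono[OF _ Suc.IH[of b'], of "Suc t"] by simp
  have [measurable]: "X t \<in> borel_measurable (F (Suc t))" using Xmeas by auto
  define fi where "fi = (\<lambda>i \<omega>. \<theta> t \<omega> b + eta_obs (\<theta> t \<omega>) r Rmax i
                      * (rhat_obs (\<theta> t \<omega>) (X t \<omega>) i b - baseline (\<theta> t \<omega>) r i b))"
  have "(\<lambda>\<omega>. \<theta> (Suc t) \<omega> b) \<in> borel_measurable (F (Suc t)) \<longleftrightarrow>
      (\<lambda>\<omega>. fi (A t \<omega>) \<omega>) \<in> borel_measurable (F (Suc t))"
    by (rule measurable_cong) (use upd in \<open>auto simp: spaceF fi_def\<close>)
  moreover have "(\<lambda>\<omega>. fi (A t \<omega>) \<omega>) \<in> borel_measurable (F (Suc t))"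
  proof (rule measurable_compose_countable'[where I=UNIV and f=fi and g="A t"])
    fix i :: 'a assume "i \<in> UNIV"
    show "(\<lambda>\<omega>. fi i \<omega>) \<in> borel_measurable (F (Suc t))"
      unfolding fi_def eta_obs_def rhat_obs_def baseline_def softmax_def exp_reward_def by measurable
  qed (use Ameas in auto)
  ultimately show ?case by simp
qed

lemma theta_measM[measurable]: "(\<lambda>\<omega>. \<theta> t \<omega> b) \<in> borel_measurable M"
  using measM[OF theta_meas] .

lemma Ameas_M[measurable]: "A t \<in> measurable M (count_space UNIV)"
  using measurable_from_subalg[OF sub[rule_format] Ameas[rule_format]] .

lemma Xmeas_M[measurable]: "X t \<in> borel_measurable M"
  using measM Xmeas by blast

lemma V_meas: "(\<lambda>\<omega>. Vr (\<theta> t \<omega>) r) \<in> borel_measurable (F t)"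
proof -
  have [measurable]: "(\<lambda>\<omega>. \<theta> t \<omega> b) \<in> borel_measurable (F t)" for b by (rule theta_meas)
  show ?thesis unfolding softmax_def exp_reward_def by measurable
qed

lemma V01: "0 \<le> Vr \<theta>' r \<and> Vr \<theta>' r \<le> 1"
  using exp_reward_bounds[of 0 r 1 \<theta>'] r01 by auto

lemma bintM: "f \<in> borel_measurable M \<Longrightarrow> (\<And>\<omega>. \<omega> \<in> space M \<Longrightarrow> \<bar>f \<omega>\<bar> \<le> B) \<Longrightarrow> integrable M (f :: 'w \<Rightarrow> real)"
  by (rule integrable_const_bound[where B=B]) auto

lemma ce_g:
  assumes Z: "Z \<in> borel_measurable (F t)" and Zb: "\<And>\<omega>. \<omega> \<in> space M \<Longrightarrow> \<bar>Z \<omega>\<bar> \<le> B"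
    and g[measurable]: "g \<in> borel_measurable borel" and gb: "\<And>x. \<bar>g x\<bar> \<le> Bg"
  shows "(\<integral>\<omega>. Z \<omega> * (indicator {\<omega>\<in>space M. A t \<omega> = a} \<omega> * g (X t \<omega>)) \<partial>M)
       = (\<integral>\<omega>. Z \<omega> * (softmax (\<theta> t \<omega>) a * (\<integral>x. g x \<partial>Rd a)) \<partial>M)"
proof -
  interpret S: sigma_finite_subalgebra M "F t"
    by (rule finite_measure_subalgebra_is_sigma_finite) (unfold_locales, rule sub[rule_format])
  have [measurable]: "Z \<in> borel_measurable M" using measM[OF Z] .
  have Am[measurable]: "{\<omega>\<in>space M. A t \<omega> = a} \<in> sets M" by measurable
  have i: "integrable M (\<lambda>\<omega>. Z \<omega> * (indicator {\<omega>\<in>space M. A t \<omega> = a} \<omega> * g (X t \<omega>)))"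
  proof (rule bintM[where B="B * Bg"])
    fix \<omega> assume w: "\<omega> \<in> space M"
    have "\<bar>indicator {\<omega>\<in>space M. A t \<omega> = a} \<omega> * g (X t \<omega>)\<bar> \<le> Bg"
      using gb[of "X t \<omega>"] by (auto simp: indicator_def)
    then show "\<bar>Z \<omega> * (indicator {\<omega>\<in>space M. A t \<omega> = a} \<omega> * g (X t \<omega>))\<bar> \<le> B * Bg"
      unfolding abs_mult[of "Z \<omega>"] using Zb[OF w] by (intro mult_mono) auto
  qed measurable
  have "(\<integral>\<omega>. Z \<omega> * (indicator {\<omega>\<in>space M. A t \<omega> = a} \<omega> * g (X t \<omega>)) \<partial>M)
      = (\<integral>\<omega>. Z \<omega> * real_cond_exp M (F t) (\<lambda>\<omega>. indicator {\<omega>\<in>space M. A t \<omega> = a} \<omega> * g (X t \<omega>)) \<omega> \<partial>M)"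
    by (rule S.real_cond_exp_intg(2)[OF i Z, symmetric]) measurable
  also have "\<dots> = (\<integral>\<omega>. Z \<omega> * (softmax (\<theta> t \<omega>) a * (\<integral>x. g x \<partial>Rd a)) \<partial>M)"
  proof (rule integral_cong_AE)
    have bg: "bounded (range g)" unfolding bounded_iff using gb by auto
    show "AE \<omega> in M. Z \<omega> * real_cond_exp M (F t) (\<lambda>\<omega>. indicator {\<omega>\<in>space M. A t \<omega> = a} \<omega> * g (X t \<omega>)) \<omega>
        = Z \<omega> * (softmax (\<theta> t \<omega>) a * (\<integral>x. g x \<partial>Rd a))"
      using ghyp[rule_format, OF g bg, of t a] by eventually_elim simp
    show "(\<lambda>\<omega>. Z \<omega> * (softmax (\<theta> t \<omega>) a * (\<integral>x. g x \<partial>Rd a))) \<in> borel_measurable M"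
      unfolding softmax_def by measurable
  qed measurable
  finally show ?thesis .
qed

lemma X_bd: "AE \<omega> in M. \<bar>X t \<omega>\<bar> \<le> Rmax"
proof -
  define g :: "real \<Rightarrow> real" where "g = indicator {x::real. Rmax < \<bar>x\<bar>}"
  have gm[measurable]: "g \<in> borel_measurable borel" unfolding g_def by measurable
  have gb: "\<bar>g x\<bar> \<le> 1" for x unfolding g_def by (auto simp: indicator_def)
  have g0: "(\<integral>x. g x \<partial>Rd a) = 0" for a
  proof -
    have "(\<integral>x. g x \<partial>Rd a) = (\<integral>x. 0 \<partial>Rd a)"
    proof (rule integral_cong_AE[OF Rmeas[OF gm]])
      show "AE x in Rd a. g x = 0"
        using Rsupp[rule_format, of a] by eventually_elim (auto simp: g_def indicator_def)
    qed simp
    then show ?thesis by simp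
  qed
  have "AE \<omega> in M. indicator {\<omega>\<in>space M. A t \<omega> = a} \<omega> * g (X t \<omega>) = 0" for a
  proof -
    have Am[measurable]: "{\<omega>\<in>space M. A t \<omega> = a} \<in> sets M" by measurable
    have "(\<integral>\<omega>. 1 * (indicator {\<omega>\<in>space M. A t \<omega> = a} \<omega> * g (X t \<omega>)) \<partial>M)
       = (\<integral>\<omega>. 1 * (softmax (\<theta> t \<omega>) a * (\<integral>x. g x \<partial>Rd a)) \<partial>M)"
      by (rule ce_g[where B=1 and Bg=1]) (auto intro: gb)
    then have I: "(\<integral>\<omega>. indicator {\<omega>\<in>space M. A t \<omega> = a} \<omega> * g (X t \<omega>) \<partial>M) = 0" using g0 by simp
    have ii: "integrable M (\<lambda>\<omega>. indicator {\<omega>\<in>space M. A t \<omega> = a} \<omega> * g (X t \<omega>))"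
      by (rule bintM[where B=1]) (measurable, use gb in \<open>auto simp: indicator_def\<close>)
    have nn: "AE \<omega> in M. 0 \<le> indicator {\<omega>\<in>space M. A t \<omega> = a} \<omega> * g (X t \<omega>)"
      by (auto simp: g_def indicator_def)
    show ?thesis using integral_nonneg_eq_0_iff_AE[OF ii nn] I by simp
  qed
  then have "AE \<omega> in M. \<forall>a\<in>UNIV. indicator {\<omega>\<in>space M. A t \<omega> = a} \<omega> * g (X t \<omega>) = 0"
    by (intro AE_finite_allI) auto
  then show ?thesis
  proof (rule AE_mp, intro AE_I2 impI)
    fix \<omega> assume w: "\<omega> \<in> space M" and H: "\<forall>a\<in>UNIV. indicator {\<omega>\<in>space M. A t \<omega> = a} \<omega> * g (X t \<omega>) = 0"
    then have "g (X t \<omega>) = 0" using H[rule_format, of "A t \<omega>"] by (simp add: indicator_def)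
    then show "\<bar>X t \<omega>\<bar> \<le> Rmax" unfolding g_def by (auto simp: indicator_def split: if_splits)
  qed
qed

lemma G_bd: "j < 3 \<Longrightarrow> \<bar>(clip Rmax x) ^ j\<bar> \<le> (1 + Rmax)\<^sup>2"
proof -
  assume j: "j < 3"
  have c: "\<bar>clip Rmax x\<bar> \<le> 1 + Rmax" using clip_bd[OF R0, of x] by simp
  have "\<bar>(clip Rmax x) ^ j\<bar> = \<bar>clip Rmax x\<bar> ^ j" by (simp add: power_abs)
  also have "\<dots> \<le> (1 + Rmax) ^ j" using c by (intro power_mono) auto
  also have "\<dots> \<le> (1 + Rmax) ^ 2" using j R0 by (intro power_increasing) auto
  finally show ?thesis .
qed

lemma m_bd: "j < 3 \<Longrightarrow> \<bar>\<integral>x. (clip Rmax x) ^ j \<partial>Rd a\<bar> \<le> (1 + Rmax)\<^sup>2"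
proof -
  assume j: "j < 3"
  interpret P: prob_space "Rd a" using Rprob by auto
  have "\<bar>\<integral>x. (clip Rmax x) ^ j \<partial>Rd a\<bar> \<le> (\<integral>x. \<bar>(clip Rmax x) ^ j\<bar> \<partial>Rd a)" by (rule integral_abs_bound)
  also have "\<dots> \<le> (\<integral>x. (1 + Rmax)\<^sup>2 \<partial>Rd a)"
  proof (rule integral_mono)
    show "integrable (Rd a) (\<lambda>x. \<bar>(clip Rmax x) ^ j\<bar>)"
      by (rule Rint[where B="(1 + Rmax)\<^sup>2"]) (measurable, use G_bd[OF j] in simp)
  qed (use G_bd[OF j] in auto)
  finally show ?thesis by (simp add: P.prob_space)
qed

lemma weak:
  assumes Y: "Y \<in> borel_measurable (F t)" and Yb: "\<And>\<omega>. \<omega> \<in> space M \<Longrightarrow> 0 \<le> Y \<omega> \<and> Y \<omega> \<le> 1"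
  shows "0 \<le> (\<integral>\<omega>. Y \<omega> * (Vr (\<theta> (Suc t) \<omega>) r - Vr (\<theta> t \<omega>) r) \<partial>M)"
proof -
  define K where "K = 1 / (8 * Rmax\<^sup>2) + 2 * (1 / (8 * Rmax\<^sup>2))\<^sup>2"
  define Bg where "Bg = (1 + Rmax)\<^sup>2"
  define Z where "Z a j \<omega> = Y \<omega> * qc Rmax (\<theta> t \<omega>) r a j" for a j \<omega>
  define G where "G j x = (clip Rmax x) ^ j" for j x
  define m where "m a j = (\<integral>x. G j x \<partial>Rd a)" for a j
  define I :: "'a \<Rightarrow> 'w \<Rightarrow> real" where "I a \<omega> = indicator {\<omega>\<in>space M. A t \<omega> = a} \<omega>" for a \<omega>
  have K0: "0 \<le> K" unfolding K_def by simp
  have Bg0: "0 \<le> Bg" unfolding Bg_def by simp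
  have th[measurable]: "(\<lambda>\<omega>. \<theta> t \<omega> b) \<in> borel_measurable (F t)" for b by (rule theta_meas)
  have Ym[measurable]: "Y \<in> borel_measurable M" using measM[OF Y] .
  have Zm: "Z a j \<in> borel_measurable (F t)" for a j
    unfolding Z_def qc_def uf_def vf_def kap_def softmax_def exp_reward_def using Y by measurable
  have ZmM[measurable]: "Z a j \<in> borel_measurable M" for a j using measM[OF Zm] .
  have Zb: "\<bar>Z a j \<omega>\<bar> \<le> K" if "\<omega> \<in> space M" for a j \<omega>
  proof -
    have "\<bar>Z a j \<omega>\<bar> = \<bar>Y \<omega>\<bar> * \<bar>qc Rmax (\<theta> t \<omega>) r a j\<bar>" unfolding Z_def abs_mult ..
    also have "\<dots> \<le> 1 * K" using Yb[OF that] qc_bd[OF Rpos, of r "\<theta> t \<omega>" a j] r01 K0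
      unfolding K_def by (intro mult_mono) auto
    finally show ?thesis by simp
  qed
  have Gm[measurable]: "G j \<in> borel_measurable borel" for j unfolding G_def by measurable
  have Gb: "\<bar>G j x\<bar> \<le> Bg" if "j < 3" for j x unfolding G_def Bg_def using G_bd[OF that] .
  have mb: "\<bar>m a j\<bar> \<le> Bg" if "j < 3" for a j unfolding m_def G_def Bg_def using m_bd[OF that] .
  have Im[measurable]: "I a \<in> borel_measurable M" for a unfolding I_def by measurable
  have Ib: "\<bar>I a \<omega>\<bar> \<le> 1" for a \<omega> unfolding I_def by (auto simp: indicator_def)
  have smb: "\<bar>softmax (\<theta> t \<omega>) a\<bar> \<le> 1" for \<omega> a using softmax_pos softmax_le1
    by (metis abs_of_pos)
  have dec: "Y \<omega> * Qf Rmax (\<theta> t \<omega>) r (A t \<omega>) (clip Rmax (X t \<omega>))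
      = (\<Sum>a\<in>UNIV. \<Sum>j<3. Z a j \<omega> * (I a \<omega> * G j (X t \<omega>)))" if w: "\<omega> \<in> space M" for \<omega>
  proof -
    have "(\<Sum>a\<in>UNIV. \<Sum>j<3. Z a j \<omega> * (I a \<omega> * G j (X t \<omega>)))
        = (\<Sum>a\<in>UNIV. if A t \<omega> = a then (\<Sum>j<3. Z a j \<omega> * G j (X t \<omega>)) else 0)"
      by (rule sum.cong) (auto simp: I_def indicator_def w)
    also have "\<dots> = (\<Sum>j<3. Z (A t \<omega>) j \<omega> * G j (X t \<omega>))"
      by (simp add: sum.delta)
    also have "\<dots> = Y \<omega> * Qf Rmax (\<theta> t \<omega>) r (A t \<omega>) (clip Rmax (X t \<omega>))"
      unfolding Z_def G_def Qf_def by (simp add: sum_distrib_left algebra_simps)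
    finally show ?thesis by simp
  qed
  have i1: "integrable M (\<lambda>\<omega>. Z a j \<omega> * (I a \<omega> * G j (X t \<omega>)))" if j: "j < 3" for a j
  proof (rule bintM[where B="K * (1 * Bg)"])
    fix \<omega> assume w: "\<omega> \<in> space M"
    show "\<bar>Z a j \<omega> * (I a \<omega> * G j (X t \<omega>))\<bar> \<le> K * (1 * Bg)"
      unfolding abs_mult using Zb[OF w] Ib Gb[OF j] K0 Bg0 by (intro mult_mono) auto
  qed measurable
  have i2: "integrable M (\<lambda>\<omega>. Z a j \<omega> * (softmax (\<theta> t \<omega>) a * m a j))" if j: "j < 3" for a j
  proof (rule bintM[where B="K * (1 * Bg)"])
    fix \<omega> assume w: "\<omega> \<in> space M"
    show "\<bar>Z a j \<omega> * (softmax (\<theta> t \<omega>) a * m a j)\<bar> \<le> K * (1 * Bg)"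
      unfolding abs_mult using Zb[OF w] smb mb[OF j] K0 Bg0 by (intro mult_mono) auto
  qed (unfold softmax_def, measurable)
  have ce: "(\<integral>\<omega>. Z a j \<omega> * (I a \<omega> * G j (X t \<omega>)) \<partial>M) = (\<integral>\<omega>. Z a j \<omega> * (softmax (\<theta> t \<omega>) a * m a j) \<partial>M)"
    if j: "j < 3" for a j
    unfolding I_def m_def by (rule ce_g[OF Zm _ Gm, where B=K and Bg=Bg]) (use Zb Gb[OF j] in auto)
  have intQ: "integrable M (\<lambda>\<omega>. Y \<omega> * Qf Rmax (\<theta> t \<omega>) r (A t \<omega>) (clip Rmax (X t \<omega>)))"
  proof -
    have "integrable M (\<lambda>\<omega>. \<Sum>a\<in>UNIV. \<Sum>j<3. Z a j \<omega> * (I a \<omega> * G j (X t \<omega>)))"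
    proof (rule Bochner_Integration.integrable_sum)
      fix a show "integrable M (\<lambda>\<omega>. \<Sum>j<3. Z a j \<omega> * (I a \<omega> * G j (X t \<omega>)))"
        by (rule Bochner_Integration.integrable_sum) (rule i1, simp)
    qed
    then show ?thesis by (subst Bochner_Integration.integrable_cong[OF refl dec]) auto
  qed
  have "(\<integral>\<omega>. Y \<omega> * Qf Rmax (\<theta> t \<omega>) r (A t \<omega>) (clip Rmax (X t \<omega>)) \<partial>M)
      = (\<integral>\<omega>. (\<Sum>a\<in>UNIV. \<Sum>j<3. Z a j \<omega> * (I a \<omega> * G j (X t \<omega>))) \<partial>M)"
    by (rule Bochner_Integration.integral_cong[OF refl dec])
  also have "\<dots> = (\<Sum>a\<in>UNIV. \<Sum>j<3. (\<integral>\<omega>. Z a j \<omega> * (I a \<omega> * G j (X t \<omega>)) \<partial>M))"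
  proof -
    have ia: "integrable M (\<lambda>\<omega>. \<Sum>j<3. Z a j \<omega> * (I a \<omega> * G j (X t \<omega>)))" for a
      by (rule Bochner_Integration.integrable_sum) (rule i1, simp)
    have "(\<integral>\<omega>. (\<Sum>a\<in>UNIV. \<Sum>j<3. Z a j \<omega> * (I a \<omega> * G j (X t \<omega>))) \<partial>M)
        = (\<Sum>a\<in>UNIV. (\<integral>\<omega>. (\<Sum>j<3. Z a j \<omega> * (I a \<omega> * G j (X t \<omega>))) \<partial>M))"
      by (rule Bochner_Integration.integral_sum) (rule ia)
    also have "\<dots> = (\<Sum>a\<in>UNIV. \<Sum>j<3. (\<integral>\<omega>. Z a j \<omega> * (I a \<omega> * G j (X t \<omega>)) \<partial>M))"
      by (rule sum.cong[OF refl], rule Bochner_Integration.integral_sum) (rule i1, simp)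
    finally show ?thesis .
  qed
  also have "\<dots> = (\<Sum>a\<in>UNIV. \<Sum>j<3. (\<integral>\<omega>. Z a j \<omega> * (softmax (\<theta> t \<omega>) a * m a j) \<partial>M))"
    using ce by simp
  also have "\<dots> = (\<integral>\<omega>. (\<Sum>a\<in>UNIV. \<Sum>j<3. Z a j \<omega> * (softmax (\<theta> t \<omega>) a * m a j)) \<partial>M)"
  proof -
    have ia: "integrable M (\<lambda>\<omega>. \<Sum>j<3. Z a j \<omega> * (softmax (\<theta> t \<omega>) a * m a j))" for a
      by (rule Bochner_Integration.integrable_sum) (rule i2, simp)
    have "(\<integral>\<omega>. (\<Sum>a\<in>UNIV. \<Sum>j<3. Z a j \<omega> * (softmax (\<theta> t \<omega>) a * m a j)) \<partial>M)
        = (\<Sum>a\<in>UNIV. (\<integral>\<omega>. (\<Sum>j<3. Z a j \<omega> * (softmax (\<theta> t \<omega>) a * m a j)) \<partial>M))"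
      by (rule Bochner_Integration.integral_sum) (rule ia)
    also have "\<dots> = (\<Sum>a\<in>UNIV. \<Sum>j<3. (\<integral>\<omega>. Z a j \<omega> * (softmax (\<theta> t \<omega>) a * m a j) \<partial>M))"
      by (rule sum.cong[OF refl], rule Bochner_Integration.integral_sum) (rule i2, simp)
    finally show ?thesis by simp
  qed
  also have "\<dots> \<ge> 0"
  proof (rule integral_nonneg_AE, rule AE_I2)
    fix \<omega> assume w: "\<omega> \<in> space M"
    have "(\<Sum>a\<in>UNIV. \<Sum>j<3. Z a j \<omega> * (softmax (\<theta> t \<omega>) a * m a j))
       = Y \<omega> * (\<Sum>a\<in>UNIV. softmax (\<theta> t \<omega>) a * (\<Sum>j<3. qc Rmax (\<theta> t \<omega>) r a j * m a j))"
      unfolding Z_def by (simp add: sum_distrib_left algebra_simps)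
    also have "\<dots> \<ge> 0"
    proof (rule mult_nonneg_nonneg)
      show "0 \<le> Y \<omega>" using Yb[OF w] by simp
      show "0 \<le> (\<Sum>a\<in>UNIV. softmax (\<theta> t \<omega>) a * (\<Sum>j<3. qc Rmax (\<theta> t \<omega>) r a j * m a j))"
      proof (rule sum_nonneg)
      fix a :: 'a assume "a \<in> UNIV"
      interpret P: prob_space "Rd a" using Rprob by auto
      have m0: "m a 0 = 1" unfolding m_def G_def by (simp add: P.prob_space)
      have m1': "m a 1 = r a" unfolding m_def G_def using m1 by simp
      have m2': "m a 2 \<le> Rmax\<^sup>2" unfolding m_def G_def using m2 by simp
      have "(\<Sum>j<3. qc Rmax (\<theta> t \<omega>) r a j * m a j) = qc Rmax (\<theta> t \<omega>) r a 0 + qc Rmax (\<theta> t \<omega>) r a 1 * r a + qc Rmax (\<theta> t \<omega>) r a 2 * m a 2"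
        by (simp add: numeral_3_eq_3 m0 m1'[unfolded One_nat_def] numeral_2_eq_2)
      also have "\<dots> \<ge> 0"
        by (rule exp_bound_expect[OF Rpos _ _ r_le m2']) (use r01 in auto)
      finally show "0 \<le> softmax (\<theta> t \<omega>) a * (\<Sum>j<3. qc Rmax (\<theta> t \<omega>) r a j * m a j)"
        using softmax_pos[of "\<theta> t \<omega>" a] by simp
    qed
    qed
    finally show "0 \<le> (\<Sum>a\<in>UNIV. \<Sum>j<3. Z a j \<omega> * (softmax (\<theta> t \<omega>) a * m a j))" .
  qed
  also have "(\<integral>\<omega>. Y \<omega> * Qf Rmax (\<theta> t \<omega>) r (A t \<omega>) (clip Rmax (X t \<omega>)) \<partial>M)
       \<le> (\<integral>\<omega>. Y \<omega> * (Vr (\<theta> (Suc t) \<omega>) r - Vr (\<theta> t \<omega>) r) \<partial>M)"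
  proof (rule integral_mono_AE[OF intQ])
    have [measurable]: "(\<lambda>\<omega>. Vr (\<theta> s \<omega>) r) \<in> borel_measurable M" for s using measM[OF V_meas] .
    show "integrable M (\<lambda>\<omega>. Y \<omega> * (Vr (\<theta> (Suc t) \<omega>) r - Vr (\<theta> t \<omega>) r))"
    proof (rule bintM[where B="1 * 1"])
      fix \<omega> assume w: "\<omega> \<in> space M"
      have "\<bar>Vr (\<theta> (Suc t) \<omega>) r - Vr (\<theta> t \<omega>) r\<bar> \<le> 1" using V01[of "\<theta> (Suc t) \<omega>"] V01[of "\<theta> t \<omega>"] by auto
      then show "\<bar>Y \<omega> * (Vr (\<theta> (Suc t) \<omega>) r - Vr (\<theta> t \<omega>) r)\<bar> \<le> 1 * 1"
        unfolding abs_mult using Yb[OF w] by (intro mult_mono) auto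
    qed measurable
    show "AE \<omega> in M. Y \<omega> * Qf Rmax (\<theta> t \<omega>) r (A t \<omega>) (clip Rmax (X t \<omega>))
        \<le> Y \<omega> * (Vr (\<theta> (Suc t) \<omega>) r - Vr (\<theta> t \<omega>) r)"
      using X_bd[of t] AE_space
    proof eventually_elim
      case (elim \<omega>)
      then have cx: "clip Rmax (X t \<omega>) = X t \<omega>" unfolding clip_def by auto
      have "Qf Rmax (\<theta> t \<omega>) r (A t \<omega>) (X t \<omega>) \<le> Vr (\<theta> (Suc t) \<omega>) r - Vr (\<theta> t \<omega>) r"
        unfolding upd[rule_format, OF elim(2)]
        by (rule case_ii_step[OF Rpos _ _ r_le elim(1)]) (use r01 in auto)
      then show ?case unfolding cx using Yb[OF elim(2)] by (intro mult_left_mono) auto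
    qed
  qed
  finally show ?thesis .
qed

lemma conv_ii: "AE \<omega> in M. convergent (\<lambda>t. Vr (\<theta> t \<omega>) r)"
proof -
  interpret B: bsub M F "\<lambda>t \<omega>. Vr (\<theta> t \<omega>) r"
  proof unfold_locales
    show "subalgebra M (F t)" for t using sub by auto
    show "sets (F t) \<subseteq> sets (F (Suc t))" for t using Fmono by auto
    show "(\<lambda>\<omega>. Vr (\<theta> t \<omega>) r) \<in> borel_measurable (F t)" for t by (rule V_meas)
    show "0 \<le> Vr (\<theta> t \<omega>) r \<and> Vr (\<theta> t \<omega>) r \<le> 1" for t \<omega> by (rule V01)
    show "0 \<le> (\<integral>\<omega>. Y \<omega> * (Vr (\<theta> (Suc t) \<omega>) r - Vr (\<theta> t \<omega>) r) \<partial>M)"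
      if "Y \<in> borel_measurable (F t)" "\<And>\<omega>. \<omega> \<in> space M \<Longrightarrow> 0 \<le> Y \<omega> \<and> Y \<omega> \<le> 1" for t Y
      by (rule weak[OF that])
  qed
  show ?thesis by (rule B.converges)
qed

end


theorem corollary1:
  fixes M :: "'w measure" and F :: "nat \<Rightarrow> 'w measure"
    and A :: "nat \<Rightarrow> 'w \<Rightarrow> 'a::finite" and X :: "nat \<Rightarrow> 'w \<Rightarrow> real"
    and \<theta> :: "nat \<Rightarrow> 'w \<Rightarrow> 'a \<Rightarrow> real" and \<theta>0 :: "'a \<Rightarrow> real"
    and r :: "'a \<Rightarrow> real" and R :: "'a \<Rightarrow> real measure"
    and Rmax :: real and \<eta> :: real
  assumes "prob_space M"
    and "CARD('a) \<ge> 2"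
    and "\<forall>a. r a \<in> {0..1}"
    and "Rmax > 0"
    and "\<forall>a. prob_space (R a)"
    and "\<forall>a. sets (R a) = sets borel"
    and "\<forall>a. AE x in R a. x \<in> {-Rmax..Rmax}"
    and "\<forall>a. (\<integral>x. x \<partial>R a) = r a"
    and "\<forall>t. subalgebra M (F t)"
    and "\<forall>t. sets (F t) \<subseteq> sets (F (Suc t))"
    and "\<forall>t. A t \<in> measurable (F (Suc t)) (count_space UNIV)"
    and "\<forall>t. X t \<in> borel_measurable (F (Suc t))"
    and "\<forall>\<omega>\<in>space M. \<theta> 0 \<omega> = \<theta>0"
    and "\<forall>t a. AE \<omega> in M.
           real_cond_exp M (F t) (indicator {\<omega>\<in>space M. A t \<omega> = a}) \<omega>
             = softmax (\<theta> t \<omega>) a"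
    and "(\<eta> > 0 \<and>
          (\<forall>t. \<forall>\<omega>\<in>space M. \<theta> (Suc t) \<omega> =
             (\<lambda>a. \<theta> t \<omega> a + \<eta> * (rhat_true (\<theta> t \<omega>) r (A t \<omega>) a
                                    - baseline (\<theta> t \<omega>) r (A t \<omega>) a))))
       \<or> ((\<forall>t a (g::real \<Rightarrow> real). g \<in> borel_measurable borel \<longrightarrow> bounded (range g) \<longrightarrow>
             (AE \<omega> in M.
               real_cond_exp M (F t)
                 (\<lambda>\<omega>. indicator {\<omega>\<in>space M. A t \<omega> = a} \<omega> * g (X t \<omega>)) \<omega>
               = softmax (\<theta> t \<omega>) a * (\<integral>x. g x \<partial>R a)))
          \<and> (\<forall>t. \<forall>\<omega>\<in>space M. \<theta> (Suc t) \<omega> =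
             (\<lambda>a. \<theta> t \<omega> a + eta_obs (\<theta> t \<omega>) r Rmax (A t \<omega>)
                      * (rhat_obs (\<theta> t \<omega>) (X t \<omega>) (A t \<omega>) a
                         - baseline (\<theta> t \<omega>) r (A t \<omega>) a))))"
  shows "AE \<omega> in M. convergent (\<lambda>t. exp_reward (softmax (\<theta> t \<omega>)) r)"
  using assms(15)
proof (elim disjE conjE)
  assume eta: "\<eta> > 0" and upd: "\<forall>t. \<forall>\<omega>\<in>space M. \<theta> (Suc t) \<omega> =
             (\<lambda>a. \<theta> t \<omega> a + \<eta> * (rhat_true (\<theta> t \<omega>) r (A t \<omega>) a
                                    - baseline (\<theta> t \<omega>) r (A t \<omega>) a))"
  show ?thesis
  proof (rule AE_I2)
    fix \<omega> assume w: "\<omega> \<in> space M"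
    have "incseq (\<lambda>t. exp_reward (softmax (\<theta> t \<omega>)) r)"
    proof (rule incseq_SucI)
      fix t
      show "exp_reward (softmax (\<theta> t \<omega>)) r \<le> exp_reward (softmax (\<theta> (Suc t) \<omega>)) r"
        unfolding upd[rule_format, OF w] by (rule case_i_step[OF eta])
    qed
    moreover have "\<forall>t. exp_reward (softmax (\<theta> t \<omega>)) r \<le> 1"
    proof
      fix t
      have r0: "\<And>a. 0 \<le> r a" and r1: "\<And>a. r a \<le> 1" using assms(3) by auto
      show "exp_reward (softmax (\<theta> t \<omega>)) r \<le> 1" by (rule exp_reward_bounds(2)[OF r0 r1])
    qed
    ultimately obtain L where "(\<lambda>t. exp_reward (softmax (\<theta> t \<omega>)) r) \<longlonglongrightarrow> L"
      using incseq_convergent by blast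
    then show "convergent (\<lambda>t. exp_reward (softmax (\<theta> t \<omega>)) r)" by (auto simp: convergent_def)
  qed
next
  assume g: "\<forall>t a (g::real \<Rightarrow> real). g \<in> borel_measurable borel \<longrightarrow> bounded (range g) \<longrightarrow>
             (AE \<omega> in M.
               real_cond_exp M (F t)
                 (\<lambda>\<omega>. indicator {\<omega>\<in>space M. A t \<omega> = a} \<omega> * g (X t \<omega>)) \<omega>
               = softmax (\<theta> t \<omega>) a * (\<integral>x. g x \<partial>R a))"
    and upd: "\<forall>t. \<forall>\<omega>\<in>space M. \<theta> (Suc t) \<omega> =
             (\<lambda>a. \<theta> t \<omega> a + eta_obs (\<theta> t \<omega>) r Rmax (A t \<omega>)
                      * (rhat_obs (\<theta> t \<omega>) (X t \<omega>) (A t \<omega>) a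
                         - baseline (\<theta> t \<omega>) r (A t \<omega>) a))"
  interpret S: st M F A X \<theta> \<theta>0 r R Rmax
    unfolding st_def st_axioms_def by (intro conjI; (fact assms(1,3-13) g upd))
  show ?thesis by (rule S.conv_ii)
qed


end
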